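(* Let $N=2n+1$ and $m>0$. (1) Let $\tilde s\in\tilde{\mathbb K}_m$ be topologically semisimple. Then there exists $k\in\mathbb K_m$ such that $k^{-1}\tilde sk\in M\rtimes\theta$, where $M$ is the set of matrices whose block form for $2n+1=n+1+n$ has entries: first block row $(\mathfrak o_E,0,\mathfrak p_E^{-m})$, middle row $(0,1,0)$, last block row $(\mathfrak p_E^m,0,\mathfrak o_E)$. (2) Let $t\in\mathbb K_{m,H}$ be topologically semisimple. Then there exists $k\in\mathbb K_{m,H}$ such that $k^{-1}tk\in M$, with $M$ as in (1).
   Context: Let $E/F$ be an unramified quadratic extension of non-archimedean local fields of characteristic $0$ and residue characteristic $p>2$, Galois conjugation $x\mapsto\overline x$, ring of integers $\mathfrak o_E$ with maximal ideal $\mathfrak p_E$. Let $J_N$ be the $N\times N$ antidiagonal matrix with $(i,N+1-i)$-entry $(-1)^{i-1}$; $G=\mathrm{GL}_N(E)$, $\theta(x)=J_N{}^t\overline x^{-1}J_N^{-1}$, with $k^{-1}(s\rtimes\theta)k=k^{-1}s\theta(k)\rtimes\theta$; $H=\{g\in G:\theta(g)=g\}$. $\mathbb K_m$ is the group of $k\in G$ with $\det k\in\mathfrak o_E^\times$ whose block form for $2n+1=n+1+n$ has entries: first block row $(\mathfrak o_E,\mathfrak o_E,\mathfrak p_E^{-m})$, middle row $(\mathfrak p_E^m,1+\mathfrak p_E^m,\mathfrak o_E)$, last block row $(\mathfrak p_E^m,\mathfrak p_E^m,\mathfrak o_E)$; $\tilde{\mathbb K}_m=\mathbb K_m\rtimes\theta$,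 $\mathbb K_{m,H}=\mathbb K_m\cap H$. Topologically semisimple means of finite order prime to $p$ (in $G\rtimes\langle\theta\rangle$, resp. in $H$). *)

theory Defs
  imports "Jordan_Normal_Form.Determinant" "Jordan_Normal_Form.Gauss_Jordan_Elimination"
          "HOL-Computational_Algebra.Primes"
begin

text \<open>The field E is a type of class field_char_0 (characteristic 0).
  v is the normalized discrete valuation of E (its value at 0 is irrelevant);
  membership in the fractional ideal p_E^j is "x = 0 or v x \<ge> j".\<close>

definition in_pow :: "('e::field \<Rightarrow> int) \<Rightarrow> int \<Rightarrow> 'e \<Rightarrow> bool" where
  "in_pow v j x \<longleftrightarrow> x = 0 \<or> v x \<ge> j"

abbreviation in_O :: "('e::field \<Rightarrow> int) \<Rightarrow> 'e \<Rightarrow> bool" where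
  "in_O v x \<equiv> in_pow v 0 x"

definition is_unit_O :: "('e::field \<Rightarrow> int) \<Rightarrow> 'e \<Rightarrow> bool" where
  "is_unit_O v x \<longleftrightarrow> x \<noteq> 0 \<and> v x = 0"

definition discrete_valuation :: "('e::field \<Rightarrow> int) \<Rightarrow> bool" where
  "discrete_valuation v \<longleftrightarrow>
     (\<forall>x y. x \<noteq> 0 \<longrightarrow> y \<noteq> 0 \<longrightarrow> v (x * y) = v x + v y) \<and>
     (\<forall>x y. x \<noteq> 0 \<longrightarrow> y \<noteq> 0 \<longrightarrow> x + y \<noteq> 0 \<longrightarrow> v (x + y) \<ge> min (v x) (v y)) \<and>
     (\<exists>w. w \<noteq> 0 \<and> v w = 1)"

definition v_complete :: "('e::field \<Rightarrow> int) \<Rightarrow> bool" where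
  "v_complete v \<longleftrightarrow>
     (\<forall>a :: nat \<Rightarrow> 'e.
        (\<forall>k. \<exists>M. \<forall>i\<ge>M. \<forall>j\<ge>M. in_pow v k (a i - a j)) \<longrightarrow>
        (\<exists>L. \<forall>k. \<exists>M. \<forall>i\<ge>M. in_pow v k (a i - L)))"

definition residue_char_finite :: "('e::field \<Rightarrow> int) \<Rightarrow> nat \<Rightarrow> bool" where
  "residue_char_finite v p \<longleftrightarrow>
     prime p \<and> in_pow v 1 (of_nat p) \<and>
     (\<exists>R. finite R \<and> (\<forall>r\<in>R. in_O v r) \<and>
          (\<forall>x. in_O v x \<longrightarrow> (\<exists>r\<in>R. in_pow v 1 (x - r))))"

definition nonarch_local_field :: "('e::field_char_0 \<Rightarrow> int) \<Rightarrow> nat \<Rightarrow> bool" where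
  "nonarch_local_field v p \<longleftrightarrow> discrete_valuation v \<and> v_complete v \<and> residue_char_finite v p"

text \<open>sigma is a field automorphism of E of order exactly 2 (Galois conjugation of the
  quadratic extension E/F, F = fixed field), preserving the valuation; E/F unramified:
  a uniformizer of E can be chosen in F.\<close>
definition unram_quad_conj :: "('e::field \<Rightarrow> int) \<Rightarrow> ('e \<Rightarrow> 'e) \<Rightarrow> bool" where
  "unram_quad_conj v \<sigma> \<longleftrightarrow>
     (\<forall>x y. \<sigma> (x + y) = \<sigma> x + \<sigma> y) \<and> (\<forall>x y. \<sigma> (x * y) = \<sigma> x * \<sigma> y) \<and>
     \<sigma> 1 = 1 \<and> (\<forall>x. \<sigma> (\<sigma> x) = x) \<and> (\<exists>x. \<sigma> x \<noteq> x) \<and>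
     (\<forall>x. v (\<sigma> x) = v x) \<and>
     (\<exists>w. w \<noteq> 0 \<and> \<sigma> w = w \<and> v w = 1)"

definition J_mat :: "nat \<Rightarrow> 'e::field mat" where
  "J_mat N = mat N N (\<lambda>(i,j). if j = N - 1 - i then (-1) ^ i else 0)"

definition minv :: "'e::field mat \<Rightarrow> 'e mat" where
  "minv A = the (mat_inverse A)"

definition GL :: "nat \<Rightarrow> 'e::field mat set" where
  "GL N = {g \<in> carrier_mat N N. det g \<noteq> 0}"

definition theta :: "('e::field \<Rightarrow> 'e) \<Rightarrow> nat \<Rightarrow> 'e mat \<Rightarrow> 'e mat" where
  "theta \<sigma> N x = J_mat N * minv (transpose_mat (map_mat \<sigma> x)) * minv (J_mat N)"

definition H_grp :: "('e::field \<Rightarrow> 'e) \<Rightarrow> nat \<Rightarrow> 'e mat set" where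
  "H_grp \<sigma> N = {g \<in> GL N. theta \<sigma> N g = g}"

text \<open>Block index of 0-based row/column index for 2n+1 = n+1+n:
  0 = first block, 1 = middle, 2 = last.\<close>
definition blk :: "nat \<Rightarrow> nat \<Rightarrow> nat" where
  "blk n i = (if i < n then 0 else if i = n then 1 else 2)"

definition K_entry :: "('e::field \<Rightarrow> int) \<Rightarrow> int \<Rightarrow> nat \<Rightarrow> nat \<Rightarrow> 'e \<Rightarrow> bool" where
  "K_entry v m a b x =
     (if a = 0 then (if b = 2 then in_pow v (-m) x else in_O v x)
      else if a = 1 then (if b = 0 then in_pow v m x else if b = 1 then in_pow v m (x - 1) else in_O v x)
      else (if b = 2 then in_O v x else in_pow v m x))"

definition K_m :: "('e::field \<Rightarrow> int) \<Rightarrow> nat \<Rightarrow> int \<Rightarrow> 'e mat set" where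
  "K_m v n m = {k \<in> carrier_mat (2*n+1) (2*n+1). is_unit_O v (det k) \<and>
     (\<forall>i < 2*n+1. \<forall>j < 2*n+1. K_entry v m (blk n i) (blk n j) (k $$ (i,j)))}"

definition K_mH :: "('e::field \<Rightarrow> int) \<Rightarrow> ('e \<Rightarrow> 'e) \<Rightarrow> nat \<Rightarrow> int \<Rightarrow> 'e mat set" where
  "K_mH v \<sigma> n m = K_m v n m \<inter> H_grp \<sigma> (2*n+1)"

definition M_entry :: "('e::field \<Rightarrow> int) \<Rightarrow> int \<Rightarrow> nat \<Rightarrow> nat \<Rightarrow> 'e \<Rightarrow> bool" where
  "M_entry v m a b x =
     (if a = 1 \<or> b = 1 then x = (if a = 1 \<and> b = 1 then 1 else 0)
      else if a = 0 then (if b = 0 then in_O v x else in_pow v (-m) x)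
      else (if b = 0 then in_pow v m x else in_O v x))"

definition M_set :: "('e::field \<Rightarrow> int) \<Rightarrow> nat \<Rightarrow> int \<Rightarrow> 'e mat set" where
  "M_set v n m = {x \<in> carrier_mat (2*n+1) (2*n+1).
     (\<forall>i < 2*n+1. \<forall>j < 2*n+1. M_entry v m (blk n i) (blk n j) (x $$ (i,j)))}"

text \<open>Elements (g, b) stand for g \<rtimes> theta^b, b :: bool (theta^2 = 1);
  (g \<rtimes> a)(h \<rtimes> b) = g a(h) \<rtimes> ab.\<close>
definition sd_mult :: "('e::field \<Rightarrow> 'e) \<Rightarrow> nat \<Rightarrow> 'e mat \<times> bool \<Rightarrow> 'e mat \<times> bool \<Rightarrow> 'e mat \<times> bool" where
  "sd_mult \<sigma> N x y = (fst x * (if snd x then theta \<sigma> N (fst y) else fst y), snd x \<noteq> snd y)"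

fun sd_pow :: "('e::field \<Rightarrow> 'e) \<Rightarrow> nat \<Rightarrow> 'e mat \<times> bool \<Rightarrow> nat \<Rightarrow> 'e mat \<times> bool" where
  "sd_pow \<sigma> N x 0 = (1\<^sub>m N, False)"
| "sd_pow \<sigma> N x (Suc d) = sd_mult \<sigma> N (sd_pow \<sigma> N x d) x"

definition top_ss_sd :: "('e::field \<Rightarrow> 'e) \<Rightarrow> nat \<Rightarrow> nat \<Rightarrow> 'e mat \<times> bool \<Rightarrow> bool" where
  "top_ss_sd \<sigma> N p x \<longleftrightarrow>
     (\<exists>d>0. sd_pow \<sigma> N x d = (1\<^sub>m N, False)) \<and>
     coprime (LEAST d. d > 0 \<and> sd_pow \<sigma> N x d = (1\<^sub>m N, False)) p"

definition top_ss :: "nat \<Rightarrow> nat \<Rightarrow> 'e::field mat \<Rightarrow> bool" where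
  "top_ss N p t \<longleftrightarrow>
     (\<exists>d>0. t ^\<^sub>m d = 1\<^sub>m N) \<and> coprime (LEAST d. d > 0 \<and> t ^\<^sub>m d = 1\<^sub>m N) p"

end

theory Submission
  imports Defs
begin



section \<open>Valuation basics\<close>

locale vsetting =
  fixes v :: "'e::field_char_0 \<Rightarrow> int"
  assumes dv: "discrete_valuation v"
begin

lemma vmult: "x \<noteq> 0 \<Longrightarrow> y \<noteq> 0 \<Longrightarrow> v (x * y) = v x + v y"
  using dv unfolding discrete_valuation_def by blast

lemma vadd: "x \<noteq> 0 \<Longrightarrow> y \<noteq> 0 \<Longrightarrow> x + y \<noteq> 0 \<Longrightarrow> v (x + y) \<ge> min (v x) (v y)"
  using dv unfolding discrete_valuation_def by blast

lemma v1: "v 1 = 0"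
  using vmult[of 1 1] by simp

lemma vneg1: "v (-1) = 0"
  using vmult[of "-1" "-1"] v1 by simp

lemma vneg: "v (- x) = v x" if "x \<noteq> 0"
  using vmult[of "-1" x] vneg1 that by simp

lemma vinv: "x \<noteq> 0 \<Longrightarrow> v (inverse x) = - v x"
  using vmult[of x "inverse x"] v1 by simp

lemma in_pow_mono: "j \<le> k \<Longrightarrow> in_pow v k x \<Longrightarrow> in_pow v j x"
  unfolding in_pow_def by auto

lemma in_pow_0[simp]: "in_pow v j 0"
  unfolding in_pow_def by simp

lemma in_pow_add: "in_pow v j x \<Longrightarrow> in_pow v j y \<Longrightarrow> in_pow v j (x + y)"
  unfolding in_pow_def using vadd[of x y] by fastforce

lemma in_pow_neg: "in_pow v j x \<Longrightarrow> in_pow v j (- x)"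
  unfolding in_pow_def by (cases "x = 0") (auto simp: vneg)

lemma in_pow_neg_iff[simp]: "in_pow v j (- x) = in_pow v j x"
  using in_pow_neg[of j x] in_pow_neg[of j "-x"] by auto

lemma in_pow_diff: "in_pow v j x \<Longrightarrow> in_pow v j y \<Longrightarrow> in_pow v j (x - y)"
  using in_pow_add[of j x "-y"] by simp

lemma in_pow_mult: "in_pow v a x \<Longrightarrow> in_pow v b y \<Longrightarrow> in_pow v (a + b) (x * y)"
  unfolding in_pow_def by (cases "x = 0 \<or> y = 0") (auto simp: vmult)

lemma in_pow_mult': "in_pow v a x \<Longrightarrow> in_pow v b y \<Longrightarrow> c \<le> a + b \<Longrightarrow> in_pow v c (x * y)"
  using in_pow_mult in_pow_mono by blast

lemma in_pow_sum: "finite S \<Longrightarrow> (\<And>i. i \<in> S \<Longrightarrow> in_pow v j (f i)) \<Longrightarrow> in_pow v j (sum f S)"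
  by (induction S rule: finite_induct) (auto intro: in_pow_add)

lemma in_pow_all_zero: "(\<And>k. in_pow v k x) \<Longrightarrow> x = 0"
  unfolding in_pow_def by (metis linorder_not_le less_add_one)

lemma in_pow_one: "in_pow v 0 1"
  unfolding in_pow_def using v1 by simp

lemma in_pow_one_not: "j > 0 \<Longrightarrow> \<not> in_pow v j 1"
  unfolding in_pow_def using v1 by simp

lemma in_O_of_nat: "in_O v (of_nat k)"
  by (induction k) (auto intro: in_pow_add in_pow_one)

lemma in_O_of_int: "in_O v (of_int k)"
proof (cases "k \<ge> 0")
  case True then show ?thesis using in_O_of_nat[of "nat k"] by simp
next
  case False then show ?thesis using in_O_of_nat[of "nat (-k)"]
    by (metis in_pow_neg_iff nat_0_le neg_0_le_iff_le nle_le of_int_minus of_int_of_nat_eq)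
qed

lemma unit_mult: "x \<noteq> 0 \<Longrightarrow> v x = 0 \<Longrightarrow> in_pow v j (x * y) = in_pow v j y"
  unfolding in_pow_def by (cases "y = 0") (auto simp: vmult)

lemma unit_mult_inv: "x \<noteq> 0 \<Longrightarrow> v x = 0 \<Longrightarrow> in_pow v j (inverse x * y) = in_pow v j y"
  by (rule unit_mult) (auto simp: vinv)

lemma in_O_unit: "x \<noteq> 0 \<Longrightarrow> in_O v x \<Longrightarrow> in_O v (inverse x) \<Longrightarrow> v x = 0"
  unfolding in_pow_def using vinv[of x] by auto

lemma v_zero_unit: "u \<noteq> 0 \<Longrightarrow> v u = 0 \<Longrightarrow> in_pow v 1 (x - u) \<Longrightarrow> x \<noteq> 0 \<and> v x = 0"
proof -
  assume u: "u \<noteq> 0" "v u = 0" and d: "in_pow v 1 (x - u)"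
  have O: "in_O v x" using in_pow_add[OF in_pow_mono[OF _ d, of 0] in_pow_mono[of 0 0 u]] u
    unfolding in_pow_def by auto
  have x0: "x \<noteq> 0"
  proof
    assume "x = 0" then have "in_pow v 1 u" using d in_pow_neg by fastforce
    then show False using u unfolding in_pow_def by auto
  qed
  have "u = x + (u - x)" by simp
  moreover have "in_pow v 1 (u - x)" using in_pow_neg[OF d] by (simp add: minus_diff_eq)
  ultimately have "v x \<le> 0"
  proof -
    have "u - x \<noteq> 0 \<Longrightarrow> v u \<ge> min (v x) (v (u - x))"
      using vadd[of x "u - x"] u x0 by simp
    then show ?thesis using u \<open>in_pow v 1 (u - x)\<close> unfolding in_pow_def by (cases "u - x = 0") auto
  qed
  then show ?thesis using O x0 unfolding in_pow_def by auto
qed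

lemma coprime_unit:
  assumes pr: "prime p" and pp: "in_pow v 1 (of_nat p)" and cp: "coprime r p" and r: "r > 0"
  shows "(of_nat r :: 'e) \<noteq> 0 \<and> v (of_nat r) = 0"
proof -
  have r0: "(of_nat r :: 'e) \<noteq> 0" using r by simp
  have "gcd (int r) (int p) = 1" using cp by (metis coprime_iff_gcd_eq_1 gcd_int_int_eq of_nat_1)
  then obtain a b :: int where ab: "a * int r + b * int p = 1" using bezout_int[of "int r" "int p"] by auto
  have "(of_int (a * int r + b * int p) :: 'e) = 1" using ab by simp
  then have eq: "of_int a * of_nat r + of_int b * of_nat p = (1::'e)" by simp
  have "v (of_nat r) \<ge> 0" using in_O_of_nat[of r] r0 unfolding in_pow_def by auto
  moreover have "\<not> v (of_nat r :: 'e) \<ge> 1"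
  proof
    assume "v (of_nat r :: 'e) \<ge> 1"
    then have "in_pow v 1 (of_nat r :: 'e)" unfolding in_pow_def by auto
    then have "in_pow v 1 (of_int a * of_nat r + of_int b * of_nat p :: 'e)"
      using in_pow_add[OF in_pow_mult[OF in_O_of_int] in_pow_mult[OF in_O_of_int pp]] by auto
    then show False using eq in_pow_one_not[of 1] by simp
  qed
  ultimately show ?thesis using r0 by simp
qed

end




locale csetting = vsetting v for v :: "'e::field_char_0 \<Rightarrow> int" +
  fixes \<sigma> :: "'e \<Rightarrow> 'e"
  assumes s_add: "\<sigma> (x + y) = \<sigma> x + \<sigma> y"
    and s_mult: "\<sigma> (x * y) = \<sigma> x * \<sigma> y"
    and s_one: "\<sigma> 1 = 1"
    and s_inv: "\<sigma> (\<sigma> x) = x"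
    and s_v: "v (\<sigma> x) = v x"
    and comp: "v_complete v"
    and two: "v 2 = 0"
begin

lemma s_zero[simp]: "\<sigma> 0 = 0"
  using s_add[of 0 0] by simp

lemma s_neg: "\<sigma> (- x) = - \<sigma> x"
  using s_add[of x "-x"] by (simp add: eq_neg_iff_add_eq_0 add.commute)

lemma s_diff: "\<sigma> (x - y) = \<sigma> x - \<sigma> y"
  using s_add[of x "-y"] s_neg[of y] by simp

lemma s_eq0[simp]: "\<sigma> x = 0 \<longleftrightarrow> x = 0"
  by (metis s_inv s_zero)

lemma s_of_nat[simp]: "\<sigma> (of_nat k) = of_nat k"
  by (induction k) (auto simp: s_add s_one)

lemma s_numeral[simp]: "\<sigma> (numeral k) = numeral k"
  using s_of_nat[of "numeral k"] by simp

lemma s_inverse: "\<sigma> (inverse x) = inverse (\<sigma> x)"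
proof (cases "x = 0")
  case True then show ?thesis by simp
next
  case False
  have "\<sigma> x * \<sigma> (inverse x) = 1" using s_mult[of x "inverse x"] False s_one by simp
  then show ?thesis by (simp add: inverse_unique)
qed

lemma in_pow_s[simp]: "in_pow v j (\<sigma> x) = in_pow v j x"
  unfolding in_pow_def by (simp add: s_v)

lemma two_ne0: "(2::'e) \<noteq> 0" by simp

lemma inv2: "in_O v (inverse (2::'e))"
  unfolding in_pow_def using vinv[OF two_ne0] two by simp

lemma sqrt_lemma:
  assumes c: "\<sigma> c = c" and cm: "in_pow v m (c - 1)" and m: "m > 0"
  shows "\<exists>\<mu>. \<sigma> \<mu> = \<mu> \<and> in_pow v m (\<mu> - 1) \<and> \<mu> * \<mu> * c = 1"
proof -
  define x :: "nat \<Rightarrow> 'e" where "x = rec_nat 1 (\<lambda>k y. y * (3 - c * y * y) * inverse 2)"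
  have x0: "x 0 = 1" and xS: "\<And>k. x (Suc k) = x k * (3 - c * x k * x k) * inverse 2"
    unfolding x_def by auto
  define \<epsilon> where "\<epsilon> k = c * x k * x k - 1" for k
  have cO: "in_O v c" using in_pow_add[OF in_pow_mono[OF _ cm, of 0] in_pow_one] m by simp
  have three: "(3::'e) = of_nat 3" by simp
  have inv: "in_pow v (m + int k) (\<epsilon> k) \<and> in_pow v m (x k - 1) \<and> \<sigma> (x k) = x k" for k
  proof (induction k)
    case 0 then show ?case using cm s_one by (simp add: x0 \<epsilon>_def)
  next
    case (Suc k)
    let ?e = "\<epsilon> k" and ?y = "x k"
    have yO: "in_O v ?y" using in_pow_add[OF in_pow_mono[OF _ conjunct1[OF conjunct2[OF Suc]], of 0] in_pow_one] m by simp
    have id1: "\<epsilon> (Suc k) = ?e * ?e * (?e - 3) * inverse 4"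
      unfolding \<epsilon>_def xS by (simp add: field_simps)
    have inv4: "in_O v (inverse (4::'e))"
      using in_pow_mult[OF inv2 inv2] by (simp add: mult_inverse_of_nat_commute flip: inverse_mult_distrib)
    have "in_pow v ((m + int k) + (m + int k) + 0 + 0) (?e * ?e * (?e - 3) * inverse 4)"
      apply (intro in_pow_mult inv4 in_pow_diff)
      using Suc in_pow_mono[of 0 "m + int k" ?e] m apply auto
      using in_O_of_nat[of 3] by simp
    then have e1: "in_pow v (m + int (Suc k)) (\<epsilon> (Suc k))"
      unfolding id1 by (rule in_pow_mono[rotated]) (use m in auto)
    have id2: "x (Suc k) - x k = - (?y * ?e * inverse 2)"
      unfolding \<epsilon>_def xS by (simp add: field_simps)
    have "in_pow v (0 + (m + int k) + 0) (?y * ?e * inverse 2)"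
      by (intro in_pow_mult yO inv2) (use Suc in auto)
    then have d: "in_pow v (m + int k) (x (Suc k) - x k)" unfolding id2 by simp
    have "x (Suc k) - 1 = (x (Suc k) - x k) + (x k - 1)" by simp
    then have x1: "in_pow v m (x (Suc k) - 1)"
      using in_pow_add[OF in_pow_mono[OF _ d, of m] conjunct1[OF conjunct2[OF Suc]]] by simp
    have "\<sigma> (x (Suc k)) = \<sigma> (x k) * (\<sigma> 3 - \<sigma> c * \<sigma> (x k) * \<sigma> (x k)) * inverse (\<sigma> 2)"
      by (simp only: xS s_mult s_diff s_inverse)
    then have "\<sigma> (x (Suc k)) = x (Suc k)"
      unfolding xS using Suc c by (simp only: s_numeral)
    then show ?case using e1 x1 by simp
  qed
  have step: "in_pow v (m + int k) (x (Suc k) - x k)" for k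
  proof -
    have yO: "in_O v (x k)" using in_pow_add[OF in_pow_mono[OF _ conjunct1[OF conjunct2[OF inv[of k]]], of 0] in_pow_one] m by simp
    have id2: "x (Suc k) - x k = - (x k * \<epsilon> k * inverse 2)"
      unfolding \<epsilon>_def xS by (simp add: field_simps)
    have "in_pow v (0 + (m + int k) + 0) (x k * \<epsilon> k * inverse 2)"
      by (intro in_pow_mult yO inv2) (use inv in auto)
    then show ?thesis unfolding id2 by simp
  qed
  have cauchy1: "in_pow v (m + int i) (x j - x i)" if "i \<le> j" for i j
    using that
  proof (induction j)
    case 0 then show ?case by simp
  next
    case (Suc j)
    show ?case
    proof (cases "i = Suc j")
      case True then show ?thesis by simp
    next
      case False
      then have "i \<le> j" using Suc by simp
      have "x (Suc j) - x i = (x (Suc j) - x j) + (x j - x i)" by simp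
      then show ?thesis using in_pow_add[OF in_pow_mono[OF _ step[of j]] Suc.IH[OF \<open>i \<le> j\<close>]] \<open>i \<le> j\<close> by simp
    qed
  qed
  have "\<exists>M. \<forall>i\<ge>M. \<forall>j\<ge>M. in_pow v K (x i - x j)" for K
  proof (intro exI allI impI)
    fix i j assume i: "i \<ge> nat K" and j: "j \<ge> nat K"
    show "in_pow v K (x i - x j)"
    proof (cases "i \<le> j")
      case True
      have "in_pow v (m + int i) (x i - x j)" using in_pow_neg[OF cauchy1[OF True]] by (simp add: minus_diff_eq)
      then show ?thesis by (rule in_pow_mono[rotated]) (use i m in auto)
    next
      case False
      have "in_pow v (m + int j) (x i - x j)" using cauchy1[of j i] False by simp
      then show ?thesis by (rule in_pow_mono[rotated]) (use j m in auto)
    qed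
  qed
  then obtain L where L: "\<And>K. \<exists>M. \<forall>i\<ge>M. in_pow v K (x i - L)"
    using comp unfolding v_complete_def by blast
  have near: "\<exists>i. in_pow v K (x i - L) \<and> in_pow v K (\<epsilon> i)" for K
  proof -
    obtain M where M: "\<forall>i\<ge>M. in_pow v K (x i - L)" using L by blast
    let ?i = "max M (nat K)"
    have "in_pow v K (\<epsilon> ?i)" using inv[of ?i] by (rule_tac in_pow_mono[rotated]) (use m in auto)
    then show ?thesis using M by (intro exI[of _ ?i]) auto
  qed
  obtain i0 where i0: "in_pow v 0 (x i0 - L)" using near by blast
  have LO: "in_O v L"
  proof -
    have "in_O v (x i0)" using in_pow_add[OF in_pow_mono[OF _ conjunct1[OF conjunct2[OF inv[of i0]]], of 0] in_pow_one] m by simp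
    then show ?thesis using in_pow_diff[OF _ i0, of "x i0"] by simp
  qed
  have "c * L * L - 1 = 0"
  proof (rule in_pow_all_zero)
    fix K
    obtain i where i: "in_pow v K (x i - L)" "in_pow v K (\<epsilon> i)" using near by blast
    have xO: "in_O v (x i)" using in_pow_add[OF in_pow_mono[OF _ conjunct1[OF conjunct2[OF inv[of i]]], of 0] in_pow_one] m by simp
    have eq: "c * L * L - 1 = - (c * (x i - L) * (L + x i)) + \<epsilon> i"
      unfolding \<epsilon>_def by (simp add: algebra_simps)
    have "in_pow v (0 + K + 0) (c * (x i - L) * (L + x i))"
      by (intro in_pow_mult cO i in_pow_add LO xO)
    then show "in_pow v K (c * L * L - 1)" unfolding eq using in_pow_add[OF in_pow_neg i(2)] by simp
  qed
  then have sq: "L * L * c = 1" by (simp add: algebra_simps)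
  have "\<sigma> L - L = 0"
  proof (rule in_pow_all_zero)
    fix K
    obtain i where i: "in_pow v K (x i - L)" using near by blast
    have eq: "\<sigma> L - L = (x i - L) - \<sigma> (x i - L)" using inv[of i] by (simp add: s_diff)
    show "in_pow v K (\<sigma> L - L)" unfolding eq using i by (auto intro: in_pow_diff)
  qed
  then have sL: "\<sigma> L = L" by simp
  obtain i where i: "in_pow v m (x i - L)" using near by blast
  have "L - 1 = (x i - 1) - (x i - L)" by simp
  then have "in_pow v m (L - 1)" using in_pow_diff[OF conjunct1[OF conjunct2[OF inv[of i]]] i] by simp
  then show ?thesis using sL sq by blast
qed

end




locale msetting = csetting v \<sigma> for v :: "'e::field_char_0 \<Rightarrow> int" and \<sigma> +
  fixes n :: nat and m :: int
  assumes mpos: "m > 0"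
begin

definition NN where "NN = 2 * n + 1"

lemma n_lt[simp]: "n < NN" unfolding NN_def by simp
lemma NN_n[simp]: "NN - 1 - n = n" unfolding NN_def by simp
lemma NN_n'[simp]: "NN - Suc n = n" unfolding NN_def by simp
lemma NN_pos[simp]: "0 < NN" unfolding NN_def by simp
lemma NN_rev: "i < NN \<Longrightarrow> NN - 1 - i < NN" unfolding NN_def by simp
lemma NN_rev2: "i < NN \<Longrightarrow> NN - 1 - (NN - 1 - i) = i" unfolding NN_def by simp
lemma NN_rev_n: "i < NN \<Longrightarrow> (NN - 1 - i = n) = (i = n)" unfolding NN_def by auto
lemma NN_rev_inj: "i < NN \<Longrightarrow> j < NN \<Longrightarrow> (NN - 1 - i = NN - 1 - j) = (i = j)" unfolding NN_def by auto
lemma NN_even: "i < NN \<Longrightarrow> even (i + (NN - 1 - i))" unfolding NN_def by auto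
lemma NN_Suc: "l < NN \<Longrightarrow> NN - 1 - l = NN - Suc l" by simp

definition al1 :: "nat \<Rightarrow> int" where "al1 b = (if b = 0 then 0 else m)"
definition al2 :: "nat \<Rightarrow> int" where "al2 b = (if b = 2 then m else 0)"
definition fw :: "nat \<Rightarrow> nat \<Rightarrow> int" where "fw a b = max (al1 a - al1 b) (al2 a - al2 b)"

lemma fw_tri: "fw a b \<le> fw a l + fw l b"
  unfolding fw_def by auto

lemma fw_diag[simp]: "fw a a = 0"
  unfolding fw_def by auto

lemma fw_mid: "l \<noteq> 1 \<Longrightarrow> l \<le> 2 \<Longrightarrow> m \<le> fw 1 l + fw l 1"
proof -
  assume "l \<noteq> 1" "l \<le> 2"
  then have "l = 0 \<or> l = 2" by auto
  then show ?thesis unfolding fw_def al1_def al2_def using mpos by auto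
qed

lemma fw_rev: "a \<le> 2 \<Longrightarrow> b \<le> 2 \<Longrightarrow> fw (2 - b) (2 - a) = fw a b"
  unfolding fw_def al1_def al2_def using mpos
  by (cases a; cases b) (auto simp: numeral_2_eq_2 less_Suc_eq_le elim: le_SucE)

lemma fw_ge: "a \<le> 2 \<Longrightarrow> b \<le> 2 \<Longrightarrow> - m \<le> fw a b"
  unfolding fw_def al1_def al2_def using mpos by auto

lemma fw_1: "a \<le> 2 \<Longrightarrow> 0 \<le> fw a 1" "a \<le> 2 \<Longrightarrow> 0 \<le> fw 1 a"
  unfolding fw_def al1_def al2_def using mpos by auto

lemma blk_le: "blk n i \<le> 2"
  unfolding blk_def by auto

lemma blk_1[simp]: "blk n i = 1 \<longleftrightarrow> i = n"
  unfolding blk_def by auto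

lemma blk_n[simp]: "blk n n = 1"
  unfolding blk_def by auto

lemma blk_rev: "i < NN \<Longrightarrow> blk n (NN - 1 - i) = 2 - blk n i"
  unfolding blk_def NN_def by auto

definition wK :: "'e mat \<Rightarrow> bool" where
  "wK A \<longleftrightarrow> A \<in> carrier_mat NN NN \<and> (\<forall>i<NN. \<forall>j<NN. in_pow v (fw (blk n i) (blk n j)) (A $$ (i,j)))"

definition fK :: "'e mat \<Rightarrow> bool" where
  "fK A \<longleftrightarrow> wK A \<and> in_pow v m (A $$ (n,n) - 1)"

lemma fw_mid_blk: "i \<noteq> n \<Longrightarrow> m \<le> fw (Suc 0) (blk n i) + fw (blk n i) (Suc 0)"
proof -
  assume "i \<noteq> n"
  then have "blk n i \<noteq> 1" using blk_1[of i] by simp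
  then show ?thesis using fw_mid[OF _ blk_le] by simp
qed

lemma wK_D: "wK A \<Longrightarrow> i < NN \<Longrightarrow> j < NN \<Longrightarrow> in_pow v (fw (blk n i) (blk n j)) (A $$ (i,j))"
  unfolding wK_def by auto

lemma wK_C: "wK A \<Longrightarrow> A \<in> carrier_mat NN NN"
  unfolding wK_def by auto

lemma fK_wK: "fK A \<Longrightarrow> wK A"
  unfolding fK_def by auto

lemma fK_C: "fK A \<Longrightarrow> A \<in> carrier_mat NN NN"
  unfolding fK_def wK_def by auto

lemma fK_nn: "fK A \<Longrightarrow> in_pow v m (A $$ (n,n) - 1)"
  unfolding fK_def by auto

lemma mult_entry: "A \<in> carrier_mat NN NN \<Longrightarrow> B \<in> carrier_mat NN NN \<Longrightarrow> i < NN \<Longrightarrow> j < NN \<Longrightarrow>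
   (A * B) $$ (i,j) = (\<Sum>l<NN. A $$ (i,l) * B $$ (l,j))"
  by (simp add: scalar_prod_def lessThan_atLeast0)

lemma wK_mult: assumes A: "wK A" and B: "wK B" shows "wK (A * B)"
  unfolding wK_def
proof (intro conjI allI impI)
  show "A * B \<in> carrier_mat NN NN" using wK_C[OF A] wK_C[OF B] by simp
  fix i j assume i: "i < NN" and j: "j < NN"
  show "in_pow v (fw (blk n i) (blk n j)) ((A * B) $$ (i, j))"
    unfolding mult_entry[OF wK_C[OF A] wK_C[OF B] i j]
    by (intro in_pow_sum finite_lessThan in_pow_mult'[OF wK_D[OF A i] wK_D[OF B _ j]] fw_tri) auto
qed

lemma mid_entry: assumes A: "wK A" and B: "wK B"
  shows "in_pow v m ((A * B) $$ (n,n) - A $$ (n,n) * B $$ (n,n))"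
proof -
  have n: "n < NN" by simp
  have "(A * B) $$ (n,n) = A $$ (n,n) * B $$ (n,n) + (\<Sum>l\<in>{..<NN} - {n}. A $$ (n,l) * B $$ (l,n))"
    unfolding mult_entry[OF wK_C[OF A] wK_C[OF B] n n]
    by (subst sum.remove[of _ n]) auto
  moreover have "in_pow v m (\<Sum>l\<in>{..<NN} - {n}. A $$ (n,l) * B $$ (l,n))"
    by (intro in_pow_sum in_pow_mult'[OF wK_D[OF A n] wK_D[OF B _ n]]) (auto simp: fw_mid_blk)
  ultimately show ?thesis by simp
qed

lemma fK_mult: assumes A: "fK A" and B: "fK B" shows "fK (A * B)"
proof -
  have eq: "A $$ (n,n) * B $$ (n,n) - 1 = (A $$ (n,n) - 1) * B $$ (n,n) + (B $$ (n,n) - 1)"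
    by (simp add: algebra_simps)
  have "in_pow v (m + 0) ((A $$ (n,n) - 1) * B $$ (n,n))"
    using wK_D[OF fK_wK[OF B], of n n] by (intro in_pow_mult fK_nn A) auto
  then have "in_pow v m ((A $$ (n,n) - 1) * B $$ (n,n) + (B $$ (n,n) - 1))"
    using in_pow_add[OF _ fK_nn[OF B]] by simp
  then have "in_pow v m (A $$ (n,n) * B $$ (n,n) - 1)" by (subst eq)
  then show ?thesis using mid_entry[OF fK_wK[OF A] fK_wK[OF B]] wK_mult[OF fK_wK[OF A] fK_wK[OF B]]
    unfolding fK_def using in_pow_add[of m "(A * B) $$ (n,n) - A $$ (n,n) * B $$ (n,n)" "A $$ (n,n) * B $$ (n,n) - 1"] by simp
qed

lemma fK_one: "fK (1\<^sub>m NN)"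
  unfolding fK_def wK_def by (auto simp: in_pow_one)

lemma fK_pow: "fK A \<Longrightarrow> fK (A ^\<^sub>m k)"
proof (induction k)
  case 0 then show ?case using fK_one fK_C[OF 0] by simp
next
  case (Suc k) then show ?case using fK_mult by simp
qed

lemma sgn_even: "even (a + b) \<Longrightarrow> (-1::'e) ^ a * (-1) ^ b = 1"
  by (simp add: minus_one_power_iff split: if_splits)

lemma sgn_eq: "even (a + b) \<Longrightarrow> (-1::'e) ^ a = (-1) ^ b"
  by (simp add: minus_one_power_iff split: if_splits)

lemma s_sgn: "\<sigma> ((-1) ^ k * x) = (-1) ^ k * \<sigma> x"
  by (simp add: minus_one_power_iff s_neg)

lemma s_sum: "\<sigma> (sum f S) = (\<Sum>i\<in>S. \<sigma> (f i))"
  by (induction S rule: infinite_finite_induct) (auto simp: s_add)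

definition tau :: "'e mat \<Rightarrow> 'e mat" where
  "tau A = mat NN NN (\<lambda>(i,j). (-1) ^ (i + j) * \<sigma> (A $$ (NN - 1 - j, NN - 1 - i)))"

definition Em :: "'e mat" where
  "Em = mat NN NN (\<lambda>(i,j). if i = n \<and> j = n then 1 else 0)"

lemma tau_C[simp]: "tau A \<in> carrier_mat NN NN"
  unfolding tau_def by simp

lemma tau_dim[simp]: "dim_row (tau A) = NN" "dim_col (tau A) = NN"
  unfolding tau_def by simp_all

lemma tau_idx: "i < NN \<Longrightarrow> j < NN \<Longrightarrow> tau A $$ (i,j) = (-1) ^ (i + j) * \<sigma> (A $$ (NN - 1 - j, NN - 1 - i))"
  unfolding tau_def by simp

lemma Em_C[simp]: "Em \<in> carrier_mat NN NN"
  unfolding Em_def by simp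

lemma Em_dim[simp]: "dim_row Em = NN" "dim_col Em = NN"
  unfolding Em_def by simp_all

lemma Em_idx: "i < NN \<Longrightarrow> j < NN \<Longrightarrow> Em $$ (i,j) = (if i = n \<and> j = n then 1 else 0)"
  unfolding Em_def by simp

lemma tau_tau: assumes A: "A \<in> carrier_mat NN NN" shows "tau (tau A) = A"
proof (rule eq_matI)
  fix i j assume i: "i < dim_row A" and j: "j < dim_col A"
  then have i': "i < NN" and j': "j < NN" using A by auto
  have "tau (tau A) $$ (i,j) = (-1) ^ (i + j) * ((-1) ^ (NN - 1 - j + (NN - 1 - i)) * A $$ (i, j))"
    using i' j' by (simp add: tau_idx s_sgn s_inv NN_rev NN_rev2)
  also have "\<dots> = A $$ (i,j)"
  proof -
    have "(-1::'e) ^ (i + j) * (-1) ^ (NN - 1 - j + (NN - 1 - i)) = 1"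
      by (rule sgn_even) (use i' j' in \<open>auto simp: NN_def\<close>)
    then show ?thesis by (simp add: mult.assoc[symmetric])
  qed
  finally show "tau (tau A) $$ (i,j) = A $$ (i,j)" .
qed (use A in auto)

lemma tau_mult: assumes A: "A \<in> carrier_mat NN NN" and B: "B \<in> carrier_mat NN NN"
  shows "tau (A * B) = tau B * tau A"
proof (rule eq_matI)
  fix i j assume i: "i < dim_row (tau B * tau A)" and j: "j < dim_col (tau B * tau A)"
  then have i': "i < NN" and j': "j < NN" by auto
  have e1: "(A * B) $$ (NN - 1 - j, NN - 1 - i) = (\<Sum>l<NN. A $$ (NN - 1 - j, l) * B $$ (l, NN - 1 - i))"
    by (rule mult_entry[OF A B NN_rev[OF j'] NN_rev[OF i']])
  have "tau (A * B) $$ (i,j) = (-1) ^ (i + j) * \<sigma> (\<Sum>l<NN. A $$ (NN - 1 - j, l) * B $$ (l, NN - 1 - i))"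
    using tau_idx[OF i' j', of "A * B"] e1 by simp
  also have "\<dots> = (\<Sum>l<NN. (-1) ^ (i + j) * (\<sigma> (A $$ (NN - 1 - j, l)) * \<sigma> (B $$ (l, NN - 1 - i))))"
    by (simp add: s_sum s_mult sum_distrib_left)
  also have "\<dots> = (\<Sum>l<NN. tau B $$ (i, NN - Suc l) * tau A $$ (NN - Suc l, j))"
  proof (rule sum.cong[OF refl])
    fix l assume l: "l \<in> {..<NN}"
    have "(-1::'e) ^ (i + (NN - Suc l)) * (-1) ^ ((NN - Suc l) + j) = (-1) ^ (i + j)"
      using sgn_eq[of "i + (NN - Suc l) + (NN - Suc l + j)" "i+j"]
      by (simp add: power_add)
    moreover have "NN - 1 - (NN - Suc l) = l" using l by (simp add: NN_def)
    moreover have "NN - Suc l < NN" using l by (simp add: NN_def)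
    ultimately show "(-1) ^ (i + j) * (\<sigma> (A $$ (NN - 1 - j, l)) * \<sigma> (B $$ (l, NN - 1 - i))) =
      tau B $$ (i, NN - Suc l) * tau A $$ (NN - Suc l, j)"
      using i' j' l by (simp add: tau_idx algebra_simps)
  qed
  also have "\<dots> = (\<Sum>l<NN. tau B $$ (i,l) * tau A $$ (l,j))"
    by (rule sum.nat_diff_reindex)
  also have "\<dots> = (tau B * tau A) $$ (i,j)" by (rule mult_entry[OF tau_C tau_C i' j', symmetric])
  finally show "tau (A * B) $$ (i,j) = (tau B * tau A) $$ (i,j)" .
qed auto

lemma tau_add: assumes A: "A \<in> carrier_mat NN NN" and B: "B \<in> carrier_mat NN NN"
  shows "tau (A + B) = tau A + tau B"
  by (rule eq_matI) (use A B in \<open>auto simp: tau_idx s_add algebra_simps NN_rev\<close>)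

lemma tau_minus: assumes A: "A \<in> carrier_mat NN NN" and B: "B \<in> carrier_mat NN NN"
  shows "tau (A - B) = tau A - tau B"
  by (rule eq_matI) (use A B in \<open>auto simp: tau_idx s_diff algebra_simps NN_rev\<close>)

lemma tau_smult: "A \<in> carrier_mat NN NN \<Longrightarrow> tau (c \<cdot>\<^sub>m A) = \<sigma> c \<cdot>\<^sub>m tau A"
  by (rule eq_matI) (auto simp: tau_idx s_mult algebra_simps NN_rev)

lemma tau_one: "tau (1\<^sub>m NN) = 1\<^sub>m NN"
proof (rule eq_matI)
  fix i j assume "i < dim_row (1\<^sub>m NN)" "j < dim_col (1\<^sub>m NN)"
  then have i: "i < NN" and j: "j < NN" by auto
  show "tau (1\<^sub>m NN) $$ (i,j) = 1\<^sub>m NN $$ (i,j)"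
  proof (cases "i = j")
    case True
    have "(-1::'e) ^ (i + i) = 1" by (simp add: minus_one_power_iff)
    then show ?thesis using True i by (simp add: tau_idx s_one)
  next
    case False
    then have "NN - 1 - j \<noteq> NN - 1 - i" using i j NN_rev_inj by auto
    then show ?thesis using False i j by (simp add: tau_idx NN_rev)
  qed
qed auto

lemma tau_Em: "tau Em = Em"
proof (rule eq_matI)
  fix i j assume "i < dim_row Em" "j < dim_col Em"
  then have i: "i < NN" and j: "j < NN" by auto
  have "(-1::'e) ^ (n + n) = 1" by (simp add: minus_one_power_iff)
  moreover have "(NN - 1 - j = n \<and> NN - 1 - i = n) = (i = n \<and> j = n)" using i j NN_rev_n by auto
  ultimately show "tau Em $$ (i,j) = Em $$ (i,j)"
    using i j by (auto simp: tau_idx Em_idx s_one NN_rev)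
qed auto

lemma tau_nn: "tau A $$ (n,n) = \<sigma> (A $$ (n,n))"
proof -
  have "(-1::'e) ^ (n + n) = 1" by (simp add: minus_one_power_iff)
  then show ?thesis by (simp add: tau_idx)
qed

lemma wK_tau: assumes A: "wK A" shows "wK (tau A)"
  unfolding wK_def
proof (intro conjI allI impI)
  fix i j assume i: "i < NN" and j: "j < NN"
  have "in_pow v (fw (blk n (NN - 1 - j)) (blk n (NN - 1 - i))) (A $$ (NN - 1 - j, NN - 1 - i))"
    by (rule wK_D[OF A]) (use i j NN_rev in auto)
  then have "in_pow v (fw (blk n i) (blk n j)) (A $$ (NN - 1 - j, NN - 1 - i))"
    using blk_rev[OF i] blk_rev[OF j] fw_rev[OF blk_le blk_le] by simp
  then show "in_pow v (fw (blk n i) (blk n j)) (tau A $$ (i,j))"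
    using i j by (simp add: tau_idx minus_one_power_iff)
qed (rule tau_C)

lemma fK_tau: "fK A \<Longrightarrow> fK (tau A)"
  unfolding fK_def using wK_tau by (simp add: tau_nn flip: s_diff[of _ 1, unfolded s_one])

end




lemma minv_unique:
  fixes X :: "'a::field mat"
  assumes X: "X \<in> carrier_mat k k" and Y: "Y \<in> carrier_mat k k" and XY: "X * Y = 1\<^sub>m k"
  shows "minv X = Y"
proof -
  have YX: "Y * X = 1\<^sub>m k" by (rule mat_mult_left_right_inverse[OF X Y XY])
  have "X \<in> Units (ring_mat TYPE('a) k undefined)"
    unfolding Units_def using X Y XY YX by (auto simp: ring_mat_simps)
  then have "mat_inverse X \<noteq> None" using mat_inverse(1)[OF X, of undefined] by blast
  then obtain B where B: "mat_inverse X = Some B" by auto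
  from mat_inverse(2)[OF X B] have XB: "X * B = 1\<^sub>m k" and Bc: "B \<in> carrier_mat k k" by auto
  have "B = (Y * X) * B" using YX Bc by simp
  also have "\<dots> = Y * (X * B)" using X Y Bc by (simp add: assoc_mult_mat)
  also have "\<dots> = Y" using XB Y by simp
  finally show ?thesis unfolding minv_def B by simp
qed

context msetting
begin

abbreviation JN :: "'e mat" where "JN \<equiv> J_mat NN"

lemma J_dim[simp]: "dim_row JN = NN" "dim_col JN = NN"
  unfolding J_mat_def by simp_all

lemma J_C[simp]: "JN \<in> carrier_mat NN NN"
  unfolding J_mat_def by simp

lemma J_idx: "i < NN \<Longrightarrow> j < NN \<Longrightarrow> JN $$ (i,j) = (if j = NN - 1 - i then (-1) ^ i else 0)"
  unfolding J_mat_def by simp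

lemma JX_idx: assumes X: "X \<in> carrier_mat NN NN" and i: "i < NN" and j: "j < NN"
  shows "(JN * X) $$ (i,j) = (-1) ^ i * X $$ (NN - 1 - i, j)"
proof -
  have "(JN * X) $$ (i,j) = (\<Sum>l<NN. JN $$ (i,l) * X $$ (l,j))"
    by (rule mult_entry[OF J_C X i j])
  also have "\<dots> = (\<Sum>l<NN. if l = NN - 1 - i then (-1) ^ i * X $$ (l,j) else 0)"
    by (rule sum.cong) (use i in \<open>auto simp: J_idx\<close>)
  also have "\<dots> = (-1) ^ i * X $$ (NN - 1 - i, j)"
    using NN_rev[OF i] by (simp add: sum.delta')
  finally show ?thesis .
qed

lemma XJ_idx: assumes X: "X \<in> carrier_mat NN NN" and i: "i < NN" and j: "j < NN"
  shows "(X * JN) $$ (i,j) = X $$ (i, NN - 1 - j) * (-1) ^ j"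
proof -
  have "(X * JN) $$ (i,j) = (\<Sum>l<NN. X $$ (i,l) * JN $$ (l,j))"
    by (rule mult_entry[OF X J_C i j])
  also have "\<dots> = (\<Sum>l<NN. if l = NN - 1 - j then X $$ (i,l) * (-1) ^ j else 0)"
  proof (rule sum.cong[OF refl])
    fix l assume l: "l \<in> {..<NN}"
    have "(j = NN - 1 - l) = (l = NN - 1 - j)" using l j by (auto simp: NN_def)
    moreover have "l = NN - 1 - j \<Longrightarrow> (-1::'e) ^ l = (-1) ^ j"
      using NN_even[OF j] by (intro sgn_eq) (simp add: add.commute)
    ultimately show "X $$ (i,l) * JN $$ (l,j) = (if l = NN - 1 - j then X $$ (i,l) * (-1) ^ j else 0)"
      using l j by (auto simp: J_idx)
  qed
  also have "\<dots> = X $$ (i, NN - 1 - j) * (-1) ^ j"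
    using NN_rev[OF j] by (simp add: sum.delta')
  finally show ?thesis .
qed

lemma JXJ_idx: assumes X: "X \<in> carrier_mat NN NN" and i: "i < NN" and j: "j < NN"
  shows "(JN * X * JN) $$ (i,j) = (-1) ^ (i + j) * X $$ (NN - 1 - i, NN - 1 - j)"
  using XJ_idx[OF mult_carrier_mat[OF J_C X] i j] JX_idx[OF X i NN_rev[OF j]]
  by (simp add: power_add algebra_simps)

lemma JJ: "JN * JN = 1\<^sub>m NN"
proof (rule eq_matI)
  fix i j assume "i < dim_row (1\<^sub>m NN)" "j < dim_col (1\<^sub>m NN)"
  then have i: "i < NN" and j: "j < NN" by auto
  have "(JN * JN) $$ (i,j) = (-1) ^ i * JN $$ (NN - 1 - i, j)"
    by (rule JX_idx[OF J_C i j])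
  also have "\<dots> = (if i = j then 1 else 0)"
  proof (cases "i = j")
    case True
    have "(-1::'e) ^ i * (-1) ^ (NN - 1 - i) = 1" by (rule sgn_even[OF NN_even[OF i]])
    then show ?thesis using True i NN_rev[OF i] NN_rev2[OF i] by (simp add: J_idx)
  next
    case False
    then have "j \<noteq> NN - 1 - (NN - 1 - i)" using NN_rev2[OF i] by simp
    then show ?thesis using False i j NN_rev[OF i] by (simp add: J_idx)
  qed
  finally show "(JN * JN) $$ (i,j) = 1\<^sub>m NN $$ (i,j)" using i j by simp
qed auto

lemma minv_J: "minv (JN) = JN"
  by (rule minv_unique[OF J_C J_C JJ])

lemma cj_mult: assumes A: "A \<in> carrier_mat NN NN" and B: "B \<in> carrier_mat NN NN"
  shows "map_mat \<sigma> (A * B) = map_mat \<sigma> A * map_mat \<sigma> B"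
proof (rule eq_matI)
  fix i j assume "i < dim_row (map_mat \<sigma> A * map_mat \<sigma> B)" "j < dim_col (map_mat \<sigma> A * map_mat \<sigma> B)"
  then have i: "i < NN" and j: "j < NN" using A B by auto
  show "map_mat \<sigma> (A * B) $$ (i,j) = (map_mat \<sigma> A * map_mat \<sigma> B) $$ (i,j)"
    using i j A B
    by (simp add: mult_entry[OF A B i j] mult_entry[OF map_carrier_mat[THEN iffD2, OF A] map_carrier_mat[THEN iffD2, OF B] i j] s_sum s_mult)
qed (use A B in auto)

lemma cj_one: "map_mat \<sigma> (1\<^sub>m NN) = 1\<^sub>m NN"
  by (rule eq_matI) (auto simp: s_one)

lemma theta_eq: assumes A: "A \<in> carrier_mat NN NN" and Ai: "Ai \<in> carrier_mat NN NN" and AAi: "A * Ai = 1\<^sub>m NN"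
  shows "theta \<sigma> NN A = tau Ai"
proof -
  have AiA: "Ai * A = 1\<^sub>m NN" by (rule mat_mult_left_right_inverse[OF A Ai AAi])
  have "transpose_mat (map_mat \<sigma> A) * transpose_mat (map_mat \<sigma> Ai) = transpose_mat (map_mat \<sigma> Ai * map_mat \<sigma> A)"
    using A Ai by (simp add: transpose_mult[of _ NN NN _ NN])
  also have "\<dots> = 1\<^sub>m NN" using A Ai by (simp add: cj_mult[symmetric] AiA cj_one)
  finally have "minv (transpose_mat (map_mat \<sigma> A)) = transpose_mat (map_mat \<sigma> Ai)"
    by (intro minv_unique[of _ NN]) (use A Ai in auto)
  then have th: "theta \<sigma> NN A = JN * transpose_mat (map_mat \<sigma> Ai) * JN"
    unfolding theta_def minv_J by simp
  show ?thesis
  proof (rule eq_matI)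
    fix i j assume "i < dim_row (tau Ai)" "j < dim_col (tau Ai)"
    then have i: "i < NN" and j: "j < NN" by auto
    have "(JN * transpose_mat (map_mat \<sigma> Ai) * JN) $$ (i,j) =
       (-1) ^ (i + j) * transpose_mat (map_mat \<sigma> Ai) $$ (NN - 1 - i, NN - 1 - j)"
      by (rule JXJ_idx) (use Ai i j in auto)
    then show "theta \<sigma> NN A $$ (i,j) = tau Ai $$ (i,j)"
      unfolding th using Ai i j NN_rev[OF i] NN_rev[OF j]
      by (simp add: tau_idx del: One_nat_def)
  qed (simp_all add: th)
qed

end




lemma sum_skip:
  fixes g :: "nat \<Rightarrow> int"
  shows "j \<le> M \<Longrightarrow> (\<Sum>i<M. g (if i < j then i else Suc i)) + g j = (\<Sum>l<Suc M. g l)"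
proof (induction M arbitrary: j)
  case 0 then show ?case by simp
next
  case (Suc M)
  show ?case
  proof (cases "j \<le> M")
    case True
    have "(\<Sum>i<Suc M. g (if i < j then i else Suc i)) + g j
        = (\<Sum>i<M. g (if i < j then i else Suc i)) + g j + g (Suc M)"
      using True by simp
    also have "\<dots> = (\<Sum>l<Suc (Suc M). g l)" using Suc.IH[OF True] by simp
    finally show ?thesis .
  next
    case False
    then have j: "j = Suc M" using Suc by simp
    have "(\<Sum>i<Suc M. g (if i < j then i else Suc i)) = (\<Sum>i<Suc M. g i)"
      by (rule sum.cong) (use j in auto)
    then show ?thesis using j by simp
  qed
qed

context vsetting
begin

lemma in_pow_prod: "finite S \<Longrightarrow> (\<And>i. i \<in> S \<Longrightarrow> in_pow v (c i) (g i)) \<Longrightarrow> in_pow v (\<Sum>i\<in>S. c i) (\<Prod>i\<in>S. g i)"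
  by (induction S rule: finite_induct) (auto intro: in_pow_mult in_pow_one)

lemma det_weight:
  fixes A :: "'e mat"
  assumes A: "A \<in> carrier_mat k k" and w: "\<And>i j. i < k \<Longrightarrow> j < k \<Longrightarrow> in_pow v (a i - b j) (A $$ (i,j))"
  shows "in_pow v (sum a {0..<k} - sum b {0..<k}) (det A)"
  unfolding det_def'[OF A]
proof (rule in_pow_sum)
  fix p assume "p \<in> {p. p permutes {0..<k}}"
  then have p: "p permutes {0..<k}" by simp
  have "in_pow v (\<Sum>i\<in>{0..<k}. a i - b (p i)) (\<Prod>i = 0..<k. A $$ (i, p i))"
    by (rule in_pow_prod) (use w p permutes_in_image[OF p] in auto)
  moreover have "(\<Sum>i\<in>{0..<k}. a i - b (p i)) = sum a {0..<k} - sum b {0..<k}"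
    using sum.permute[OF p, of b] by (simp add: sum_subtractf comp_def)
  ultimately have "in_pow v (0 + (sum a {0..<k} - sum b {0..<k})) (signof p * (\<Prod>i = 0..<k. A $$ (i, p i)))"
    using in_pow_mult[OF in_O_of_int] by simp
  then show "in_pow v (sum a {0..<k} - sum b {0..<k}) (signof p * (\<Prod>i = 0..<k. A $$ (i, p i)))" by simp
qed (simp add: finite_permutations)

end

context msetting
begin

lemma fw_ge1: "al1 a - al1 b \<le> fw a b" and fw_ge2: "al2 a - al2 b \<le> fw a b"
  unfolding fw_def by auto

lemma in_pow_max: "in_pow v a x \<Longrightarrow> in_pow v b x \<Longrightarrow> in_pow v (max a b) x"
  unfolding in_pow_def by auto

lemma wK_det: assumes A: "wK A" shows "in_O v (det A)"
proof -
  have "in_pow v (sum (\<lambda>i. al1 (blk n i)) {0..<NN} - sum (\<lambda>i. al1 (blk n i)) {0..<NN}) (det A)"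
    by (rule det_weight[OF wK_C[OF A]]) (rule in_pow_mono[OF fw_ge1 wK_D[OF A]])
  then show ?thesis by simp
qed

lemma adj_weight:
  fixes A :: "'e mat" and al :: "nat \<Rightarrow> int"
  assumes A: "A \<in> carrier_mat NN NN"
    and w: "\<And>i j. i < NN \<Longrightarrow> j < NN \<Longrightarrow> in_pow v (al i - al j) (A $$ (i,j))"
    and i: "i < NN" and j: "j < NN"
  shows "in_pow v (al i - al j) (adj_mat A $$ (i,j))"
proof -
  let ?M = "2 * n"
  have NN: "NN = Suc ?M" unfolding NN_def by simp
  let ?D = "mat_delete A j i"
  have D: "?D \<in> carrier_mat ?M ?M" using mat_delete_carrier[OF A] by (simp add: NN)
  have "in_pow v (sum (\<lambda>i'. al (if i' < j then i' else Suc i')) {0..<?M} - sum (\<lambda>j'. al (if j' < i then j' else Suc j')) {0..<?M}) (det ?D)"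
  proof (rule det_weight[OF D])
    fix i' j' assume i': "i' < ?M" and j': "j' < ?M"
    have "?D $$ (i',j') = A $$ (if i' < j then i' else Suc i', if j' < i then j' else Suc j')"
      unfolding mat_delete_def using A i' j' by (simp add: NN)
    then show "in_pow v (al (if i' < j then i' else Suc i') - al (if j' < i then j' else Suc j')) (?D $$ (i',j'))"
      using w[of "if i' < j then i' else Suc i'" "if j' < i then j' else Suc j'"] i' j' by (simp add: NN)
  qed
  moreover have "sum (\<lambda>i'. al (if i' < j then i' else Suc i')) {0..<?M} = sum al {..<NN} - al j"
    using sum_skip[of j ?M al] j by (simp add: NN lessThan_atLeast0)
  moreover have "sum (\<lambda>i'. al (if i' < i then i' else Suc i')) {0..<?M} = sum al {..<NN} - al i"
    using sum_skip[of i ?M al] i by (simp add: NN lessThan_atLeast0)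
  ultimately have "in_pow v (al i - al j) (det ?D)" by simp
  moreover have "adj_mat A $$ (i,j) = (-1) ^ (j + i) * det ?D"
    unfolding adj_mat_def cofactor_def using A i j by simp
  ultimately show ?thesis by (simp add: minus_one_power_iff)
qed

lemma inv_fK:
  assumes A: "fK A" and u: "is_unit_O v (det A)"
  shows "\<exists>Ai. Ai \<in> carrier_mat NN NN \<and> A * Ai = 1\<^sub>m NN \<and> Ai * A = 1\<^sub>m NN \<and> fK Ai"
proof -
  have AC: "A \<in> carrier_mat NN NN" using fK_C[OF A] .
  have d0: "det A \<noteq> 0" and dv: "v (det A) = 0" using u unfolding is_unit_O_def by auto
  define Ai where "Ai = inverse (det A) \<cdot>\<^sub>m adj_mat A"
  have adjC: "adj_mat A \<in> carrier_mat NN NN" using adj_mat(1)[OF AC] .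
  have AiC: "Ai \<in> carrier_mat NN NN" unfolding Ai_def using adjC by simp
  have "A * Ai = inverse (det A) \<cdot>\<^sub>m (A * adj_mat A)"
    unfolding Ai_def by (rule mult_smult_distrib[OF AC adjC])
  also have "\<dots> = 1\<^sub>m NN" using adj_mat(2)[OF AC] d0 by (intro eq_matI) auto
  finally have AAi: "A * Ai = 1\<^sub>m NN" .
  have AiA: "Ai * A = 1\<^sub>m NN" by (rule mat_mult_left_right_inverse[OF AC AiC AAi])
  have wAi: "wK Ai"
    unfolding wK_def
  proof (intro conjI allI impI AiC)
    fix i j assume i: "i < NN" and j: "j < NN"
    have w1: "in_pow v (al1 (blk n i) - al1 (blk n j)) (adj_mat A $$ (i,j))"
      by (rule adj_weight[OF AC _ i j]) (rule in_pow_mono[OF fw_ge1 wK_D[OF fK_wK[OF A]]])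
    have w2: "in_pow v (al2 (blk n i) - al2 (blk n j)) (adj_mat A $$ (i,j))"
      by (rule adj_weight[OF AC _ i j]) (rule in_pow_mono[OF fw_ge2 wK_D[OF fK_wK[OF A]]])
    have "in_pow v (fw (blk n i) (blk n j)) (adj_mat A $$ (i,j))"
      using in_pow_max[OF w1 w2] unfolding fw_def .
    then show "in_pow v (fw (blk n i) (blk n j)) (Ai $$ (i,j))"
      unfolding Ai_def using adjC i j unit_mult_inv[OF d0 dv] by simp
  qed
  have "in_pow v m ((A * Ai) $$ (n,n) - A $$ (n,n) * Ai $$ (n,n))"
    by (rule mid_entry[OF fK_wK[OF A] wAi])
  then have h1: "in_pow v m (A $$ (n,n) * Ai $$ (n,n) - 1)"
    using AAi in_pow_neg by (fastforce simp: minus_diff_eq)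
  have eq: "Ai $$ (n,n) - 1 = (A $$ (n,n) * Ai $$ (n,n) - 1) - (A $$ (n,n) - 1) * Ai $$ (n,n)"
    by (simp add: algebra_simps)
  have "in_pow v (m + 0) ((A $$ (n,n) - 1) * Ai $$ (n,n))"
    by (intro in_pow_mult fK_nn[OF A]) (use wK_D[OF wAi, of n n] in simp)
  then have "in_pow v m (Ai $$ (n,n) - 1)" unfolding eq using in_pow_diff[OF h1] by simp
  then have "fK Ai" unfolding fK_def using wAi by simp
  then show ?thesis using AiC AAi AiA by blast
qed

end




context msetting
begin

lemma cm_mult[simp]: "A \<in> carrier_mat NN NN \<Longrightarrow> B \<in> carrier_mat NN NN \<Longrightarrow> A * B \<in> carrier_mat NN NN"
  by simp
lemma cm_add[simp]: "A \<in> carrier_mat NN NN \<Longrightarrow> B \<in> carrier_mat NN NN \<Longrightarrow> A + B \<in> carrier_mat NN NN"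
  by simp
lemma cm_minus[simp]: "A \<in> carrier_mat NN NN \<Longrightarrow> B \<in> carrier_mat NN NN \<Longrightarrow> A - B \<in> carrier_mat NN NN"
  by (simp add: minus_carrier_mat)
lemma cm_one[simp]: "1\<^sub>m NN \<in> carrier_mat NN NN"
  by simp

lemma as: "A \<in> carrier_mat NN NN \<Longrightarrow> B \<in> carrier_mat NN NN \<Longrightarrow> D \<in> carrier_mat NN NN \<Longrightarrow> A * B * D = A * (B * D)"
  by (rule assoc_mult_mat)

lemma ZE_idx: assumes Z: "Z \<in> carrier_mat NN NN" and i: "i < NN" and j: "j < NN"
  shows "(Z * Em) $$ (i,j) = (if j = n then Z $$ (i,n) else 0)"
proof -
  have "(Z * Em) $$ (i,j) = (\<Sum>l<NN. Z $$ (i,l) * Em $$ (l,j))" by (rule mult_entry[OF Z Em_C i j])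
  also have "\<dots> = (\<Sum>l<NN. if l = n then (if j = n then Z $$ (i,n) else 0) else 0)"
    by (rule sum.cong) (use j in \<open>auto simp: Em_idx\<close>)
  also have "\<dots> = (if j = n then Z $$ (i,n) else 0)" by (simp add: sum.delta)
  finally show ?thesis .
qed

lemma EZ_idx: assumes Z: "Z \<in> carrier_mat NN NN" and i: "i < NN" and j: "j < NN"
  shows "(Em * Z) $$ (i,j) = (if i = n then Z $$ (n,j) else 0)"
proof -
  have "(Em * Z) $$ (i,j) = (\<Sum>l<NN. Em $$ (i,l) * Z $$ (l,j))" by (rule mult_entry[OF Em_C Z i j])
  also have "\<dots> = (\<Sum>l<NN. if l = n then (if i = n then Z $$ (n,j) else 0) else 0)"
    by (rule sum.cong) (use i in \<open>auto simp: Em_idx\<close>)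
  also have "\<dots> = (if i = n then Z $$ (n,j) else 0)" by (simp add: sum.delta)
  finally show ?thesis .
qed

lemma ZEY_idx: assumes Z: "Z \<in> carrier_mat NN NN" and Y: "Y \<in> carrier_mat NN NN" and i: "i < NN" and j: "j < NN"
  shows "(Z * Em * Y) $$ (i,j) = Z $$ (i,n) * Y $$ (n,j)"
proof -
  have ZE: "Z * Em \<in> carrier_mat NN NN" using Z by simp
  have "(Z * Em * Y) $$ (i,j) = (\<Sum>l<NN. (Z * Em) $$ (i,l) * Y $$ (l,j))" by (rule mult_entry[OF ZE Y i j])
  also have "\<dots> = (\<Sum>l<NN. if l = n then Z $$ (i,n) * Y $$ (n,j) else 0)"
    by (rule sum.cong) (use Z i in \<open>auto simp: ZE_idx simp del: index_mult_mat(1)\<close>)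
  also have "\<dots> = Z $$ (i,n) * Y $$ (n,j)" by (simp add: sum.delta)
  finally show ?thesis .
qed

lemma EE: "Em * Em = Em"
  by (rule eq_matI) (auto simp: EZ_idx[OF Em_C] Em_idx simp del: index_mult_mat(1))

lemma EZE: assumes Z: "Z \<in> carrier_mat NN NN" shows "Em * Z * Em = Z $$ (n,n) \<cdot>\<^sub>m Em"
proof (rule eq_matI)
  fix i j assume "i < dim_row (Z $$ (n,n) \<cdot>\<^sub>m Em)" "j < dim_col (Z $$ (n,n) \<cdot>\<^sub>m Em)"
  then have i: "i < NN" and j: "j < NN" by auto
  have EZ: "Em * Z \<in> carrier_mat NN NN" using Z by simp
  show "(Em * Z * Em) $$ (i,j) = (Z $$ (n,n) \<cdot>\<^sub>m Em) $$ (i,j)"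
    using i j by (simp add: ZE_idx[OF EZ] EZ_idx[OF Z] Em_idx del: index_mult_mat(1))
qed (use Z in auto)

lemma quad_inv:
  fixes X :: "'e mat"
  assumes X: "X \<in> carrier_mat NN NN" and XX: "X * X = g \<cdot>\<^sub>m X" and ab: "a * b * g = a + b"
  shows "(a \<cdot>\<^sub>m X - 1\<^sub>m NN) * (b \<cdot>\<^sub>m X - 1\<^sub>m NN) = 1\<^sub>m NN"
proof -
  have "(a \<cdot>\<^sub>m X - 1\<^sub>m NN) * (b \<cdot>\<^sub>m X - 1\<^sub>m NN) = (a \<cdot>\<^sub>m X) * (b \<cdot>\<^sub>m X - 1\<^sub>m NN) - 1\<^sub>m NN * (b \<cdot>\<^sub>m X - 1\<^sub>m NN)"
    by (rule minus_mult_distrib_mat[where nr = NN and n = NN and nc = NN]) (use X in auto)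
  also have "(a \<cdot>\<^sub>m X) * (b \<cdot>\<^sub>m X - 1\<^sub>m NN) = (a \<cdot>\<^sub>m X) * (b \<cdot>\<^sub>m X) - (a \<cdot>\<^sub>m X) * 1\<^sub>m NN"
    by (rule mult_minus_distrib_mat[where nr = NN and n = NN and nc = NN]) (use X in auto)
  also have "(a \<cdot>\<^sub>m X) * (b \<cdot>\<^sub>m X) = (a * b) \<cdot>\<^sub>m (X * X)"
    using X by (simp add: mult_smult_assoc_mat[of _ NN NN _ NN] mult_smult_distrib[of _ NN NN _ NN]) (intro eq_matI, auto)
  also have "\<dots> = (a * b * g) \<cdot>\<^sub>m X" unfolding XX by (rule eq_matI) auto
  finally show ?thesis using X ab by (intro eq_matI) (auto simp: algebra_simps)
qed

lemma rank1_fK: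
  fixes Z :: "'e mat"
  assumes Z: "Z \<in> carrier_mat NN NN"
    and Zij: "\<And>i j. i < NN \<Longrightarrow> j < NN \<Longrightarrow> Z $$ (i,j) = c0 * ca i * rb j - (if i = j then 1 else 0)"
    and c0: "in_O v c0"
    and ca: "\<And>i. i < NN \<Longrightarrow> in_pow v (fw (blk n i) 1) (ca i)"
    and rb: "\<And>j. j < NN \<Longrightarrow> in_pow v (fw 1 (blk n j)) (rb j)"
    and nn: "in_pow v m (Z $$ (n,n) - 1)"
  shows "fK Z"
  unfolding fK_def wK_def
proof (intro conjI allI impI Z nn)
  fix i j assume i: "i < NN" and j: "j < NN"
  show "in_pow v (fw (blk n i) (blk n j)) (Z $$ (i,j))"
  proof (cases "i = n \<and> j = n")
    case True
    have "in_O v (Z $$ (n,n))"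
      using in_pow_add[OF in_pow_mono[OF _ nn, of 0] in_pow_one] mpos by simp
    then show ?thesis using True by simp
  next
    case False
    have "in_pow v (0 + fw (blk n i) 1 + fw 1 (blk n j)) (c0 * ca i * rb j)"
      by (intro in_pow_mult c0 ca rb i j)
    then have t1: "in_pow v (fw (blk n i) (blk n j)) (c0 * ca i * rb j)"
      by (rule in_pow_mono[rotated]) (use fw_tri[of "blk n i" "blk n j" 1] in simp)
    have t2: "in_pow v (fw (blk n i) (blk n j)) (if i = j then 1 else 0)"
      using in_pow_one by auto
    show ?thesis unfolding Zij[OF i j] by (rule in_pow_diff[OF t1 t2])
  qed
qed

end




context msetting
begin

lemma dl: fixes A B D :: "'e mat" shows "A \<in> carrier_mat NN NN \<Longrightarrow> B \<in> carrier_mat NN NN \<Longrightarrow> D \<in> carrier_mat NN NN \<Longrightarrow> (A + B) * D = A * D + B * D"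
  by (rule add_mult_distrib_mat)
lemma dr: fixes A B D :: "'e mat" shows "A \<in> carrier_mat NN NN \<Longrightarrow> B \<in> carrier_mat NN NN \<Longrightarrow> D \<in> carrier_mat NN NN \<Longrightarrow> A * (B + D) = A * B + A * D"
  by (rule mult_add_distrib_mat)
lemma sml: fixes A B :: "'e mat" shows "A \<in> carrier_mat NN NN \<Longrightarrow> B \<in> carrier_mat NN NN \<Longrightarrow> (c \<cdot>\<^sub>m A) * B = c \<cdot>\<^sub>m (A * B)"
  by (rule mult_smult_assoc_mat)
lemma smr: fixes A B :: "'e mat" shows "A \<in> carrier_mat NN NN \<Longrightarrow> B \<in> carrier_mat NN NN \<Longrightarrow> A * (c \<cdot>\<^sub>m B) = c \<cdot>\<^sub>m (A * B)"
  by (rule mult_smult_distrib)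
lemma mdl: fixes A B D :: "'e mat" shows "A \<in> carrier_mat NN NN \<Longrightarrow> B \<in> carrier_mat NN NN \<Longrightarrow> D \<in> carrier_mat NN NN \<Longrightarrow> (A - B) * D = A * D - B * D"
  by (rule minus_mult_distrib_mat)
lemma mdr: fixes A B D :: "'e mat" shows "A \<in> carrier_mat NN NN \<Longrightarrow> B \<in> carrier_mat NN NN \<Longrightarrow> D \<in> carrier_mat NN NN \<Longrightarrow> A * (B - D) = A * B - A * D"
  by (rule mult_minus_distrib_mat)

lemma core:
  fixes s si W :: "'e mat"
  assumes s: "fK s" and si: "fK si" and ssi: "s * si = 1\<^sub>m NN" and sis: "si * s = 1\<^sub>m NN"
    and W: "fK W" and fx: "s * (tau si * W) = W"
  shows "\<exists>k K \<mu>. k \<in> carrier_mat NN NN \<and> K \<in> carrier_mat NN NN \<and> k * K = 1\<^sub>m NN \<and> K * k = 1\<^sub>m NN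
     \<and> fK k \<and> fK K \<and> is_unit_O v (det k)
     \<and> k * Em = \<mu> \<cdot>\<^sub>m (W * Em) \<and> Em * K = \<mu> \<cdot>\<^sub>m (Em * (tau W * si))
     \<and> K * s * tau K * Em = Em \<and> Em * (K * s * tau K) = Em \<and> wK (K * s * tau K)
     \<and> (s = 1\<^sub>m NN \<longrightarrow> tau K = k)"
proof -
  have sC: "s \<in> carrier_mat NN NN" using fK_C[OF s] .
  have siC: "si \<in> carrier_mat NN NN" using fK_C[OF si] .
  have WC: "W \<in> carrier_mat NN NN" using fK_C[OF W] .
  define T where "T = tau W * si"
  have TC: "T \<in> carrier_mat NN NN" unfolding T_def using siC by simp
  have fT: "fK T" unfolding T_def by (rule fK_mult[OF fK_tau[OF W] si])
  have tsW: "tau si * W = si * W"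
  proof -
    have "si * (s * (tau si * W)) = si * W" using fx by simp
    moreover have "si * (s * (tau si * W)) = tau si * W"
      using sC siC WC by (simp add: as[symmetric] sis)
    ultimately show ?thesis by simp
  qed
  define c where "c = (T * W) $$ (n,n)"
  define B0 where "B0 = Em * T"
  define A0 where "A0 = W * Em"
  have A0C: "A0 \<in> carrier_mat NN NN" and B0C: "B0 \<in> carrier_mat NN NN"
    unfolding A0_def B0_def using WC TC by auto
  have BA0: "B0 * A0 = c \<cdot>\<^sub>m Em"
  proof -
    have "B0 * A0 = Em * (T * W) * Em" unfolding B0_def A0_def using TC WC by (simp add: as)
    then show ?thesis unfolding c_def using EZE[of "T * W"] TC WC by simp
  qed
  have tauA0: "tau A0 = Em * tau W" unfolding A0_def using WC by (simp add: tau_mult tau_Em)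
  have tauB0: "tau B0 = tau si * (W * Em)"
    unfolding B0_def T_def using WC siC by (simp add: tau_mult tau_Em tau_tau as)
  have "tau (B0 * A0) = B0 * A0"
  proof -
    have "tau (B0 * A0) = tau A0 * tau B0" using A0C B0C by (simp add: tau_mult)
    also have "\<dots> = Em * (tau W * ((tau si * W) * Em))" unfolding tauA0 tauB0 using WC siC by (simp add: as)
    also have "\<dots> = B0 * A0" unfolding tsW B0_def A0_def T_def using WC siC by (simp add: as)
    finally show ?thesis .
  qed
  then have "\<sigma> c \<cdot>\<^sub>m Em = c \<cdot>\<^sub>m Em" unfolding BA0 by (simp add: tau_smult tau_Em)
  then have "(\<sigma> c \<cdot>\<^sub>m Em) $$ (n,n) = (c \<cdot>\<^sub>m Em) $$ (n,n)" by simp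
  then have sc: "\<sigma> c = c" by (simp add: Em_idx)
  have cm: "in_pow v m (c - 1)" unfolding c_def by (rule fK_nn[OF fK_mult[OF fT W]])
  obtain \<mu> where s\<mu>: "\<sigma> \<mu> = \<mu>" and \<mu>m: "in_pow v m (\<mu> - 1)" and \<mu>c: "\<mu> * \<mu> * c = 1"
    using sqrt_lemma[OF sc cm mpos] by blast
  have \<mu>O: "in_O v \<mu>" using in_pow_add[OF in_pow_mono[OF _ \<mu>m, of 0] in_pow_one] mpos by simp
  define A' where "A' = \<mu> \<cdot>\<^sub>m A0"
  define B' where "B' = \<mu> \<cdot>\<^sub>m B0"
  have A'C: "A' \<in> carrier_mat NN NN" and B'C: "B' \<in> carrier_mat NN NN"
    unfolding A'_def B'_def using A0C B0C by auto
  have BA: "B' * A' = Em"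
  proof -
    have "B' * A' = (\<mu> * \<mu>) \<cdot>\<^sub>m (B0 * A0)"
      unfolding A'_def B'_def using A0C B0C
      by (simp add: sml smr) (intro eq_matI, auto)
    also have "\<dots> = Em" unfolding BA0 using \<mu>c by (intro eq_matI) (auto simp: mult.assoc[symmetric])
    finally show ?thesis .
  qed
  have sB: "s * tau B' = A'"
  proof -
    have "tau B' = \<mu> \<cdot>\<^sub>m (tau si * (W * Em))" unfolding B'_def using B0C s\<mu> tauB0 by (simp add: tau_smult)
    then have "s * tau B' = \<mu> \<cdot>\<^sub>m (s * (tau si * (W * Em)))" using sC siC WC by (simp add: smr)
    also have "s * (tau si * (W * Em)) = W * Em" using fx sC siC WC by (simp add: as[symmetric])
    finally show ?thesis unfolding A'_def A0_def .
  qed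
  have tauA': "tau A' = \<mu> \<cdot>\<^sub>m (Em * tau W)" unfolding A'_def using A0C tauA0 s\<mu> by (simp add: tau_smult)
  have B's: "B' * s = tau A'"
  proof -
    have "B' * s = \<mu> \<cdot>\<^sub>m (Em * (tau W * (si * s)))"
      unfolding B'_def B0_def T_def using sC siC WC by (simp add: sml as)
    then show ?thesis unfolding tauA' sis using WC by simp
  qed
  have A'_idx: "A' $$ (i,n) = \<mu> * W $$ (i,n)" if i: "i < NN" for i
    unfolding A'_def A0_def using WC i by (simp add: ZE_idx del: index_mult_mat(1))
  have B'_idx: "B' $$ (n,j) = \<mu> * T $$ (n,j)" if j: "j < NN" for j
    unfolding B'_def B0_def using TC j by (simp add: EZ_idx del: index_mult_mat(1))
  define a where "a = A' $$ (n,n)"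
  define b where "b = B' $$ (n,n)"
  have A'E: "A' * Em = A'" unfolding A'_def A0_def using WC
    by (simp add: sml as EE)
  have EB': "Em * B' = B'" unfolding B'_def B0_def using TC
    by (simp add: smr as[symmetric] EE)
  have EA': "Em * A' = a \<cdot>\<^sub>m Em"
  proof -
    have "Em * A' = \<mu> \<cdot>\<^sub>m (Em * W * Em)" unfolding A'_def A0_def using WC
      by (simp add: smr as)
    also have "\<dots> = a \<cdot>\<^sub>m Em" unfolding EZE[OF WC] a_def A'_idx[OF n_lt]
      by (intro eq_matI) auto
    finally show ?thesis .
  qed
  have B'E: "B' * Em = b \<cdot>\<^sub>m Em"
  proof -
    have "B' * Em = \<mu> \<cdot>\<^sub>m (Em * T * Em)" unfolding B'_def B0_def using TC
      by (simp add: sml)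
    also have "\<dots> = b \<cdot>\<^sub>m Em" unfolding EZE[OF TC] b_def B'_idx[OF n_lt]
      by (intro eq_matI) auto
    finally show ?thesis .
  qed
  define \<alpha> where "\<alpha> = 1 + b"
  define \<beta> where "\<beta> = 1 + a"
  have prod1: "in_pow v m (\<mu> * x - 1)" if "in_pow v m (x - 1)" for x
  proof -
    have eq: "\<mu> * x - 1 = (\<mu> - 1) * x + (x - 1)" by (simp add: algebra_simps)
    have xO: "in_O v x" using in_pow_add[OF in_pow_mono[OF _ that, of 0] in_pow_one] mpos by simp
    have "in_pow v (m + 0) ((\<mu> - 1) * x)" by (rule in_pow_mult[OF \<mu>m xO])
    then have "in_pow v m ((\<mu> - 1) * x)" by simp
    show ?thesis unfolding eq by (rule in_pow_add[OF \<open>in_pow v m ((\<mu> - 1) * x)\<close> that])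
  qed
  have am: "in_pow v m (a - 1)" unfolding a_def A'_idx[OF n_lt] by (rule prod1[OF fK_nn[OF W]])
  have bm: "in_pow v m (b - 1)" unfolding b_def B'_idx[OF n_lt] by (rule prod1[OF fK_nn[OF fT]])
  have two0: "(2::'e) \<noteq> 0" by simp
  have \<alpha>u: "\<alpha> \<noteq> 0 \<and> v \<alpha> = 0"
    by (rule v_zero_unit[OF two0 two]) (use in_pow_mono[OF _ bm, of 1] mpos in \<open>simp add: \<alpha>_def algebra_simps\<close>)
  have \<beta>u: "\<beta> \<noteq> 0 \<and> v \<beta> = 0"
    by (rule v_zero_unit[OF two0 two]) (use in_pow_mono[OF _ am, of 1] mpos in \<open>simp add: \<beta>_def algebra_simps\<close>)
  define X where "X = (Em + A') * (Em + B')"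
  have XC: "X \<in> carrier_mat NN NN" unfolding X_def using A'C B'C by simp
  have Y1: "(Em + B') * (Em + A') = (\<alpha> + \<beta>) \<cdot>\<^sub>m Em"
  proof -
    have "(Em + B') * (Em + A') = Em * Em + B' * Em + (Em * A' + B' * A')"
      using A'C B'C by (simp add: dl dr)
    also have "\<dots> = (\<alpha> + \<beta>) \<cdot>\<^sub>m Em" unfolding EE EA' B'E BA \<alpha>_def \<beta>_def
      by (intro eq_matI) (auto simp: algebra_simps)
    finally show ?thesis .
  qed
  have EEB: "Em * (Em + B') = Em + B'"
    using B'C by (simp add: dr EE EB')
  have XX: "X * X = (\<alpha> + \<beta>) \<cdot>\<^sub>m X"
  proof -
    have "X * X = (Em + A') * (((Em + B') * (Em + A')) * (Em + B'))"
      unfolding X_def using A'C B'C by (simp add: as)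
    also have "\<dots> = (\<alpha> + \<beta>) \<cdot>\<^sub>m X" unfolding Y1 X_def using A'C B'C
      by (simp add: sml smr EEB)
    finally show ?thesis .
  qed
  define k where "k = inverse \<alpha> \<cdot>\<^sub>m X - 1\<^sub>m NN"
  define K where "K = inverse \<beta> \<cdot>\<^sub>m X - 1\<^sub>m NN"
  have kC: "k \<in> carrier_mat NN NN" and KC: "K \<in> carrier_mat NN NN"
    unfolding k_def K_def using XC by auto
  have kK: "k * K = 1\<^sub>m NN" unfolding k_def K_def
    by (rule quad_inv[OF XC XX]) (use \<alpha>u \<beta>u in \<open>simp add: field_simps\<close>)
  have Kk: "K * k = 1\<^sub>m NN" unfolding k_def K_def
    by (rule quad_inv[OF XC XX]) (use \<alpha>u \<beta>u in \<open>simp add: field_simps\<close>)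
  have XE: "X * Em = \<alpha> \<cdot>\<^sub>m (Em + A')"
  proof -
    have "(Em + B') * Em = \<alpha> \<cdot>\<^sub>m Em"
      using B'C by (simp add: dl EE B'E \<alpha>_def) (intro eq_matI, auto simp: algebra_simps)
    moreover have "X * Em = (Em + A') * ((Em + B') * Em)" unfolding X_def using A'C B'C by (simp add: as)
    ultimately show ?thesis using A'C
      by (simp add: smr dl EE A'E)
  qed
  have EX: "Em * X = \<beta> \<cdot>\<^sub>m (Em + B')"
  proof -
    have "Em * (Em + A') = \<beta> \<cdot>\<^sub>m Em"
      using A'C by (simp add: dr EE EA' \<beta>_def) (intro eq_matI, auto simp: algebra_simps)
    moreover have "Em * X = (Em * (Em + A')) * (Em + B')" unfolding X_def using A'C B'C by (simp add: as)
    ultimately show ?thesis using B'C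
      by (simp add: sml EEB)
  qed
  have kE: "k * Em = A'"
  proof -
    have "k * Em = inverse \<alpha> \<cdot>\<^sub>m (X * Em) - Em" unfolding k_def using XC
      by (simp add: mdl sml)
    also have "\<dots> = A'" unfolding XE using A'C \<alpha>u by (intro eq_matI) (auto simp: distrib_left mult.assoc[symmetric])
    finally show ?thesis .
  qed
  have EK: "Em * K = B'"
  proof -
    have "Em * K = inverse \<beta> \<cdot>\<^sub>m (Em * X) - Em" unfolding K_def using XC
      by (simp add: mdr smr)
    also have "\<dots> = B'" unfolding EX using B'C \<beta>u by (intro eq_matI) (auto simp: distrib_left mult.assoc[symmetric])
    finally show ?thesis .
  qed
  have KA': "K * A' = Em" unfolding kE[symmetric] using KC kC by (simp add: as[symmetric] Kk)
  have yE: "K * s * tau K * Em = Em"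
  proof -
    have "tau K * Em = tau K * tau Em" by (simp only: tau_Em)
    also have "\<dots> = tau (Em * K)" using KC by (simp only: tau_mult[OF Em_C KC])
    finally have "tau K * Em = tau B'" unfolding EK .
    then have "K * s * tau K * Em = K * (s * tau B')" using KC sC by (simp add: as)
    then show ?thesis unfolding sB KA' .
  qed
  have Ey: "Em * (K * s * tau K) = Em"
  proof -
    have "Em * (K * s * tau K) = B' * s * tau K" using KC sC by (simp add: as[symmetric] EK)
    also have "\<dots> = tau (K * A')" unfolding B's using KC A'C by (simp add: tau_mult)
    finally show ?thesis unfolding KA' tau_Em .
  qed
  have X_idx: "X $$ (i,j) = (Em + A') $$ (i,n) * (Em + B') $$ (n,j)" if "i < NN" "j < NN" for i j
  proof -
    have "X = (Em + A') * Em * (Em + B')" unfolding X_def using A'C B'C by (simp add: as EEB)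
    then show ?thesis using ZEY_idx[of "Em + A'" "Em + B'" i j] that A'C B'C by simp
  qed
  have ca: "in_pow v (fw (blk n i) 1) ((Em + A') $$ (i,n))" if i: "i < NN" for i
  proof -
    have "in_pow v (0 + fw (blk n i) 1) (\<mu> * W $$ (i,n))"
      using wK_D[OF fK_wK[OF W] i n_lt] by (intro in_pow_mult \<mu>O) simp
    moreover have "in_pow v (fw (blk n i) 1) (Em $$ (i,n))" using i by (auto simp: Em_idx in_pow_one)
    ultimately show ?thesis using i A'C A'_idx[OF i] by (simp add: in_pow_add)
  qed
  have rb: "in_pow v (fw 1 (blk n j)) ((Em + B') $$ (n,j))" if j: "j < NN" for j
  proof -
    have "in_pow v (0 + fw 1 (blk n j)) (\<mu> * T $$ (n,j))"
      using wK_D[OF fK_wK[OF fT] n_lt j] by (intro in_pow_mult \<mu>O) simp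
    moreover have "in_pow v (fw 1 (blk n j)) (Em $$ (n,j))" using j by (auto simp: Em_idx in_pow_one)
    ultimately show ?thesis using j B'C B'_idx[OF j] by (simp add: in_pow_add)
  qed
  have can: "(Em + A') $$ (n,n) = \<beta>" unfolding \<beta>_def a_def using A'C by (simp add: Em_idx)
  have rbn: "(Em + B') $$ (n,n) = \<alpha>" unfolding \<alpha>_def b_def using B'C by (simp add: Em_idx)
  have k_idx: "k $$ (i,j) = inverse \<alpha> * (Em + A') $$ (i,n) * (Em + B') $$ (n,j) - (if i = j then 1 else 0)"
    if "i < NN" "j < NN" for i j
    unfolding k_def using that XC X_idx[OF that] by (simp add: mult.assoc)
  have K_idx: "K $$ (i,j) = inverse \<beta> * (Em + A') $$ (i,n) * (Em + B') $$ (n,j) - (if i = j then 1 else 0)"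
    if "i < NN" "j < NN" for i j
    unfolding K_def using that XC X_idx[OF that] by (simp add: mult.assoc)
  have fk: "fK k"
  proof (rule rank1_fK[OF kC k_idx])
    show "in_O v (inverse \<alpha>)" using \<alpha>u vinv unfolding in_pow_def by auto
    have "k $$ (n,n) - 1 = a - 1" using k_idx[OF n_lt n_lt] \<alpha>u unfolding can rbn \<beta>_def by (simp add: field_simps)
    then show "in_pow v m (k $$ (n,n) - 1)" using am by simp
  qed (assumption, assumption, erule ca, erule rb)
  have fKK: "fK K"
  proof (rule rank1_fK[OF KC K_idx])
    show "in_O v (inverse \<beta>)" using \<beta>u vinv unfolding in_pow_def by auto
    have "K $$ (n,n) - 1 = b - 1" using K_idx[OF n_lt n_lt] \<beta>u unfolding can rbn \<alpha>_def by (simp add: field_simps)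
    then show "in_pow v m (K $$ (n,n) - 1)" using bm by simp
  qed (assumption, assumption, erule ca, erule rb)
  have detu: "is_unit_O v (det k)"
  proof -
    have "det k * det K = 1" using det_mult[OF kC KC] kK by simp
    then have d0: "det k \<noteq> 0" "det K \<noteq> 0" by auto
    have "v (det k) + v (det K) = 0" using vmult[OF d0] v1 \<open>det k * det K = 1\<close> by simp
    moreover have "v (det k) \<ge> 0" "v (det K) \<ge> 0"
      using wK_det[OF fK_wK[OF fk]] wK_det[OF fK_wK[OF fKK]] d0 unfolding in_pow_def by auto
    ultimately show ?thesis unfolding is_unit_O_def using d0 by simp
  qed
  have wy: "wK (K * s * tau K)"
    by (intro wK_mult fK_wK fKK s fK_tau)
  have s1: "tau K = k" if s1: "s = 1\<^sub>m NN"
  proof -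
    have tB: "tau B' = A'" using sB s1 B'C by simp
    have tA: "tau A' = B'" using tau_tau[OF B'C] tB by simp
    have tX: "tau X = X"
      unfolding X_def using A'C B'C by (simp add: tau_mult tau_add tau_Em tB tA)
    have "\<sigma> a = b" unfolding a_def b_def using tau_nn[of A'] tA by simp
    then have "\<sigma> (inverse \<beta>) = inverse \<alpha>" unfolding \<alpha>_def \<beta>_def by (simp add: s_inverse s_add s_one)
    then show ?thesis unfolding K_def k_def using XC by (simp add: tau_minus tau_smult tau_one tX)
  qed
  have kE': "k * Em = \<mu> \<cdot>\<^sub>m (W * Em)" using kE unfolding A'_def A0_def .
  have EK': "Em * K = \<mu> \<cdot>\<^sub>m (Em * (tau W * si))" using EK unfolding B'_def B0_def T_def .
  have s1': "s = 1\<^sub>m NN \<longrightarrow> tau K = k" using s1 by blast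
  show ?thesis
    apply (rule exI[of _ k], rule exI[of _ K], rule exI[of _ \<mu>])
    using kC KC kK Kk fk fKK detu kE' EK' yE Ey wy s1' by (intro conjI) assumption+
qed

end




lemma sd_pow_eo:
  assumes sC: "s \<in> carrier_mat N N" and tC: "theta \<sigma> N s \<in> carrier_mat N N"
  shows "sd_pow \<sigma> N (s, True) (2 * j) = ((s * theta \<sigma> N s) ^\<^sub>m j, False) \<and>
         sd_pow \<sigma> N (s, True) (2 * j + 1) = ((s * theta \<sigma> N s) ^\<^sub>m j * s, True)"
proof (induction j)
  case 0
  have "sd_pow \<sigma> N (s, True) 1 = (s, True)"
    using sC by (simp add: sd_mult_def)
  then show ?case using sC by simp
next
  case (Suc j)
  let ?u = "s * theta \<sigma> N s"
  have uC: "?u \<in> carrier_mat N N" using sC tC by simp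
  have e: "sd_pow \<sigma> N (s, True) (2 * Suc j) = sd_mult \<sigma> N (sd_pow \<sigma> N (s, True) (2 * j + 1)) (s, True)"
    by simp
  have od0: "sd_pow \<sigma> N (s, True) (2 * j + 1) = (?u ^\<^sub>m j * s, True)" using conjunct2[OF Suc.IH] .
  have "?u ^\<^sub>m j * s * theta \<sigma> N s = ?u ^\<^sub>m Suc j"
    using sC tC uC by (simp add: assoc_mult_mat[of _ N N _ N _ N])
  then have ev: "sd_pow \<sigma> N (s, True) (2 * Suc j) = (?u ^\<^sub>m Suc j, False)"
    unfolding e od0 by (simp add: sd_mult_def)
  have "sd_pow \<sigma> N (s, True) (2 * Suc j + 1) = sd_mult \<sigma> N (sd_pow \<sigma> N (s, True) (2 * Suc j)) (s, True)"
    by simp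
  also have "\<dots> = (?u ^\<^sub>m Suc j * s, True)" unfolding ev by (simp add: sd_mult_def)
  finally have od: "sd_pow \<sigma> N (s, True) (2 * Suc j + 1) = (?u ^\<^sub>m Suc j * s, True)" .
  show ?case using ev od by blast
qed

context msetting
begin

lemma add3: fixes A B D :: "'e mat"
  shows "A \<in> carrier_mat NN NN \<Longrightarrow> B \<in> carrier_mat NN NN \<Longrightarrow> D \<in> carrier_mat NN NN \<Longrightarrow> A + B + D = (A + D) + B"
  by (intro eq_matI) auto

lemma average:
  fixes u :: "'e mat"
  assumes u: "fK u" and r: "(of_nat r :: 'e) \<noteq> 0" "v (of_nat r) = 0" and ur: "u ^\<^sub>m r = 1\<^sub>m NN"
  shows "\<exists>W. fK W \<and> u * W = W"
proof -
  have uC: "u \<in> carrier_mat NN NN" using fK_C[OF u] .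
  define S where "S = rec_nat (0\<^sub>m NN NN) (\<lambda>i A. A + u ^\<^sub>m i)"
  have S0: "S 0 = 0\<^sub>m NN NN" and SS: "\<And>k. S (Suc k) = S k + u ^\<^sub>m k" unfolding S_def by auto
  have SC: "S k \<in> carrier_mat NN NN" for k
    by (induction k) (use uC in \<open>auto simp: S0 SS\<close>)
  have pC: "u ^\<^sub>m k \<in> carrier_mat NN NN" for k using uC by simp
  have Sent: "(\<forall>i<NN. \<forall>j<NN. in_pow v (fw (blk n i) (blk n j)) (S k $$ (i,j))) \<and> in_pow v m (S k $$ (n,n) - of_nat k)" for k
  proof (induction k)
    case 0 then show ?case by (simp add: S0)
  next
    case (Suc k)
    have fp: "fK (u ^\<^sub>m k)" by (rule fK_pow[OF u])
    have "\<forall>i<NN. \<forall>j<NN. in_pow v (fw (blk n i) (blk n j)) (S (Suc k) $$ (i,j))"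
    proof (intro allI impI)
      fix i j assume i: "i < NN" and j: "j < NN"
      have "S (Suc k) $$ (i,j) = S k $$ (i,j) + (u ^\<^sub>m k) $$ (i,j)"
        unfolding SS using carrier_matD[OF SC[of k]] carrier_matD[OF pC[of k]] i j by simp
      then show "in_pow v (fw (blk n i) (blk n j)) (S (Suc k) $$ (i,j))"
        using in_pow_add[OF _ wK_D[OF fK_wK[OF fp] i j]] Suc i j by simp
    qed
    moreover have eq: "S (Suc k) $$ (n,n) - of_nat (Suc k) = (S k $$ (n,n) - of_nat k) + ((u ^\<^sub>m k) $$ (n,n) - 1)"
      using carrier_matD[OF SC[of k]] carrier_matD[OF pC[of k]] by (simp add: SS)
    then have "in_pow v m (S (Suc k) $$ (n,n) - of_nat (Suc k))"
      by (subst eq) (rule in_pow_add[OF conjunct2[OF Suc] fK_nn[OF fp]])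
    ultimately show ?case by blast
  qed
  have upow: "u * u ^\<^sub>m k = u ^\<^sub>m Suc k" for k
  proof (induction k)
    case 0 then show ?case using uC by simp
  next
    case (Suc k)
    have "u * u ^\<^sub>m Suc k = (u * u ^\<^sub>m k) * u" using uC by (simp add: as)
    then show ?case using Suc by simp
  qed
  have uS: "u * S k + 1\<^sub>m NN = S k + u ^\<^sub>m k" for k
  proof (induction k)
    case 0 then show ?case using uC by (simp add: S0)
  next
    case (Suc k)
    have "u * S (Suc k) + 1\<^sub>m NN = (u * S k + 1\<^sub>m NN) + u * u ^\<^sub>m k"
      unfolding SS using uC SC pC by (simp add: dr add3)
    also have "\<dots> = S (Suc k) + u ^\<^sub>m Suc k" unfolding Suc upow SS by simp
    finally show ?case .
  qed
  have uSr: "u * S r = S r"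
  proof (rule eq_matI)
    fix i j assume "i < dim_row (S r)" "j < dim_col (S r)"
    then have i: "i < NN" and j: "j < NN" using carrier_matD[OF SC[of r]] by auto
    have "(u * S r + 1\<^sub>m NN) $$ (i,j) = (S r + 1\<^sub>m NN) $$ (i,j)" using uS[of r] ur by simp
    then show "(u * S r) $$ (i,j) = S r $$ (i,j)" using i j carrier_matD[OF uC] carrier_matD[OF SC[of r]] by simp
  qed (use carrier_matD[OF uC] carrier_matD[OF SC[of r]] in auto)
  define W where "W = inverse (of_nat r) \<cdot>\<^sub>m S r"
  have WC: "W \<in> carrier_mat NN NN" unfolding W_def using SC by simp
  have "u * W = W" unfolding W_def using uC SC by (simp add: smr uSr)
  moreover have "fK W"
    unfolding fK_def wK_def
  proof (intro conjI allI impI WC)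
    fix i j assume i: "i < NN" and j: "j < NN"
    show "in_pow v (fw (blk n i) (blk n j)) (W $$ (i,j))"
      unfolding W_def using i j carrier_matD[OF SC[of r]] Sent[of r] unit_mult_inv[OF r] by simp
  next
    have "W $$ (n,n) - 1 = inverse (of_nat r) * (S r $$ (n,n) - of_nat r)"
      unfolding W_def using carrier_matD[OF SC[of r]] r by (simp add: field_simps)
    then show "in_pow v m (W $$ (n,n) - 1)" using Sent[of r] unit_mult_inv[OF r] by simp
  qed
  ultimately show ?thesis by blast
qed

lemma K_entry_iff: "a \<le> 2 \<Longrightarrow> b \<le> 2 \<Longrightarrow>
  K_entry v m a b x = (if a = 1 \<and> b = 1 then in_pow v m (x - 1) else in_pow v (fw a b) x)"
  unfolding K_entry_def fw_def al1_def al2_def using mpos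
  by (cases a; cases b) (auto simp: numeral_2_eq_2 less_Suc_eq_le elim: le_SucE)

lemma M_entry_iff: "a \<le> 2 \<Longrightarrow> b \<le> 2 \<Longrightarrow> a \<noteq> 1 \<Longrightarrow> b \<noteq> 1 \<Longrightarrow>
  M_entry v m a b x = in_pow v (fw a b) x"
  unfolding M_entry_def fw_def al1_def al2_def using mpos
  by (cases a; cases b) (auto simp: numeral_2_eq_2 less_Suc_eq_le elim: le_SucE)

lemma K_m_iff: "k \<in> K_m v n m \<longleftrightarrow> fK k \<and> is_unit_O v (det k)"
proof
  assume k: "k \<in> K_m v n m"
  then have kC: "k \<in> carrier_mat NN NN" and u: "is_unit_O v (det k)"
    and e: "\<And>i j. i < NN \<Longrightarrow> j < NN \<Longrightarrow> K_entry v m (blk n i) (blk n j) (k $$ (i,j))"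
    unfolding K_m_def NN_def by auto
  have nn: "in_pow v m (k $$ (n,n) - 1)" using e[OF n_lt n_lt] K_entry_iff[of 1 1] by simp
  have "in_pow v (fw (blk n i) (blk n j)) (k $$ (i,j))" if i: "i < NN" and j: "j < NN" for i j
  proof (cases "i = n \<and> j = n")
    case True
    then show ?thesis using in_pow_add[OF in_pow_mono[OF _ nn, of 0] in_pow_one] mpos by simp
  next
    case False
    then show ?thesis using e[OF i j] K_entry_iff[OF blk_le blk_le] blk_1 by auto
  qed
  then show "fK k \<and> is_unit_O v (det k)" using kC u nn unfolding fK_def wK_def by auto
next
  assume k: "fK k \<and> is_unit_O v (det k)"
  have "K_entry v m (blk n i) (blk n j) (k $$ (i,j))" if i: "i < NN" and j: "j < NN" for i j
  proof (cases "i = n \<and> j = n")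
    case True
    then show ?thesis using fK_nn[of k] k K_entry_iff[of 1 1] by simp
  next
    case False
    then show ?thesis using wK_D[OF fK_wK[of k] i j] k K_entry_iff[OF blk_le blk_le] blk_1 by auto
  qed
  then show "k \<in> K_m v n m" using k fK_C[of k] unfolding K_m_def NN_def by auto
qed

lemma M_set_I:
  fixes y :: "'e mat"
  assumes w: "wK y" and yE: "y * Em = Em" and Ey: "Em * y = Em"
  shows "y \<in> M_set v n m"
proof -
  have yC: "y \<in> carrier_mat NN NN" using wK_C[OF w] .
  have "M_entry v m (blk n i) (blk n j) (y $$ (i,j))" if i: "i < NN" and j: "j < NN" for i j
  proof (cases "i = n \<or> j = n")
    case True
    show ?thesis
    proof (cases "j = n")
      case True
      have "(y * Em) $$ (i,j) = y $$ (i,j)" using ZE_idx[OF yC i j] True by simp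
      then have "y $$ (i,j) = Em $$ (i,j)" using yE by simp
      then have "y $$ (i,j) = (if i = n then 1 else 0)" using Em_idx[OF i j] True by simp
      then show ?thesis using True unfolding M_entry_def blk_def by auto
    next
      case False
      then have "i = n" using True by simp
      have "(Em * y) $$ (i,j) = y $$ (i,j)" using EZ_idx[OF yC i j] \<open>i = n\<close> by simp
      then have "y $$ (i,j) = Em $$ (i,j)" using Ey by simp
      then have "y $$ (i,j) = 0" using Em_idx[OF i j] False by simp
      then show ?thesis using False \<open>i = n\<close> unfolding M_entry_def blk_def by auto
    qed
  next
    case False
    then have "blk n i \<noteq> 1" "blk n j \<noteq> 1" using blk_1 by auto
    then show ?thesis using M_entry_iff[OF blk_le blk_le] wK_D[OF w i j] by simp
  qed
  then show ?thesis using yC unfolding M_set_def NN_def by auto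
qed

end




theorem proposition3p5:
  fixes v :: "'e::field_char_0 \<Rightarrow> int" and \<sigma> :: "'e \<Rightarrow> 'e"
    and p n :: nat and m :: int
  assumes local: "nonarch_local_field v p"
    and p2: "p > 2"
    and conj: "unram_quad_conj v \<sigma>"
    and m_pos: "m > 0"
  shows "(\<forall>s \<in> K_m v n m. top_ss_sd \<sigma> (2*n+1) p (s, True) \<longrightarrow>
            (\<exists>k \<in> K_m v n m.
               sd_mult \<sigma> (2*n+1) (sd_mult \<sigma> (2*n+1) (minv k, False) (s, True)) (k, False)
                 \<in> M_set v n m \<times> {True}))
       \<and> (\<forall>t \<in> K_mH v \<sigma> n m. top_ss (2*n+1) p t \<longrightarrow>
            (\<exists>k \<in> K_mH v \<sigma> n m. minv k * t * k \<in> M_set v n m))"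
proof -
  have dv: "discrete_valuation v" and comp: "v_complete v" and res: "residue_char_finite v p"
    using local unfolding nonarch_local_field_def by auto
  have pr: "prime p" and pp: "in_pow v 1 (of_nat p)" using res unfolding residue_char_finite_def by auto
  interpret vsetting v by (unfold_locales) (rule dv)
  have "\<not> p dvd 2" using p2 by (auto dest: dvd_imp_le)
  then have "coprime p 2" by (rule prime_imp_coprime[OF pr])
  then have cop2: "coprime 2 p" by (simp add: coprime_commute)
  have two: "v 2 = 0" using coprime_unit[OF pr pp cop2] by simp
  have cj: "\<And>x y. \<sigma> (x + y) = \<sigma> x + \<sigma> y" "\<And>x y. \<sigma> (x * y) = \<sigma> x * \<sigma> y" "\<sigma> 1 = 1"
    "\<And>x. \<sigma> (\<sigma> x) = x" "\<And>x. v (\<sigma> x) = v x"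
    using conj unfolding unram_quad_conj_def by auto
  interpret msetting v \<sigma> n m
    by (unfold_locales) (use cj comp two m_pos in auto)
  have NNe: "2 * n + 1 = NN" by (simp add: NN_def)
  have part1: "\<exists>k \<in> K_m v n m.
               sd_mult \<sigma> NN (sd_mult \<sigma> NN (minv k, False) (s, True)) (k, False) \<in> M_set v n m \<times> {True}"
    if sK: "s \<in> K_m v n m" and ss: "top_ss_sd \<sigma> NN p (s, True)" for s
  proof -
    have fs: "fK s" and su: "is_unit_O v (det s)" using sK K_m_iff by auto
    have sC: "s \<in> carrier_mat NN NN" using fK_C[OF fs] .
    obtain si where siC: "si \<in> carrier_mat NN NN" and ssi: "s * si = 1\<^sub>m NN" and sis: "si * s = 1\<^sub>m NN"
      and fsi: "fK si" using inv_fK[OF fs su] by blast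
    have th: "theta \<sigma> NN s = tau si" by (rule theta_eq[OF sC siC ssi])
    have tC: "theta \<sigma> NN s \<in> carrier_mat NN NN" using th by simp
    define u where "u = s * tau si"
    have fu: "fK u" unfolding u_def by (rule fK_mult[OF fs fK_tau[OF fsi]])
    define d0 where "d0 = (LEAST d. d > 0 \<and> sd_pow \<sigma> NN (s, True) d = (1\<^sub>m NN, False))"
    have ex: "\<exists>d>0. sd_pow \<sigma> NN (s, True) d = (1\<^sub>m NN, False)" and cpd: "coprime d0 p"
      using ss unfolding top_ss_sd_def d0_def by auto
    have d0: "d0 > 0 \<and> sd_pow \<sigma> NN (s, True) d0 = (1\<^sub>m NN, False)"
      unfolding d0_def by (rule LeastI_ex) (use ex in blast)
    have eo: "sd_pow \<sigma> NN (s, True) (2 * j) = (u ^\<^sub>m j, False) \<and>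
         sd_pow \<sigma> NN (s, True) (2 * j + 1) = (u ^\<^sub>m j * s, True)" for j
      using sd_pow_eo[OF sC tC, of j] unfolding th u_def[symmetric] .
    obtain j where j: "d0 = 2 * j \<or> d0 = 2 * j + 1" by (metis evenE oddE)
    then have dj: "d0 = 2 * j" using d0 eo[of j] by auto
    then have j0: "j > 0" and uj: "u ^\<^sub>m j = 1\<^sub>m NN" using d0 eo[of j] by auto
    have cpj: "coprime j p" using cpd dj by simp
    have ru: "(of_nat j :: 'e) \<noteq> 0 \<and> v (of_nat j) = 0" by (rule coprime_unit[OF pr pp cpj j0])
    obtain W where fW: "fK W" and uW: "u * W = W" using average[OF fu _ _ uj] ru by blast
    have fx: "s * (tau si * W) = W" using uW fK_C[OF fW] sC unfolding u_def by (simp add: as)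
    obtain k K \<mu> where kC: "k \<in> carrier_mat NN NN" and KC: "K \<in> carrier_mat NN NN"
      and kK: "k * K = 1\<^sub>m NN" and fk: "fK k" and du: "is_unit_O v (det k)"
      and yE: "K * s * tau K * Em = Em" and Ey: "Em * (K * s * tau K) = Em" and wy: "wK (K * s * tau K)"
      using core[OF fs fsi ssi sis fW fx] by blast
    have kK_m: "k \<in> K_m v n m" using K_m_iff fk du by simp
    have mk: "minv k = K" by (rule minv_unique[OF kC KC kK])
    have tk: "theta \<sigma> NN k = tau K" by (rule theta_eq[OF kC KC kK])
    have "sd_mult \<sigma> NN (sd_mult \<sigma> NN (minv k, False) (s, True)) (k, False) = (K * s * tau K, True)"
      unfolding mk by (simp add: sd_mult_def tk)
    moreover have "K * s * tau K \<in> M_set v n m" by (rule M_set_I[OF wy yE Ey])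
    ultimately show ?thesis using kK_m by (intro bexI[of _ k]) auto
  qed
  have part2: "\<exists>k \<in> K_mH v \<sigma> n m. minv k * t * k \<in> M_set v n m"
    if tK: "t \<in> K_mH v \<sigma> n m" and ts: "top_ss NN p t" for t
  proof -
    have tKm: "t \<in> K_m v n m" and tH: "theta \<sigma> NN t = t"
      using tK unfolding K_mH_def H_grp_def NNe by auto
    have ft: "fK t" and tu: "is_unit_O v (det t)" using tKm K_m_iff by auto
    have tC: "t \<in> carrier_mat NN NN" using fK_C[OF ft] .
    obtain ti where tiC: "ti \<in> carrier_mat NN NN" and tti: "t * ti = 1\<^sub>m NN" and tit: "ti * t = 1\<^sub>m NN"
      using inv_fK[OF ft tu] by blast
    have "tau ti = t" using theta_eq[OF tC tiC tti] tH by simp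
    then have "ti = tau t" using tau_tau[OF tiC] by simp
    then have ttt: "tau t * t = 1\<^sub>m NN" using tit by simp
    define d0 where "d0 = (LEAST d. d > 0 \<and> t ^\<^sub>m d = 1\<^sub>m NN)"
    have ex: "\<exists>d>0. t ^\<^sub>m d = 1\<^sub>m NN" and cpd: "coprime d0 p"
      using ts unfolding top_ss_def d0_def by auto
    have d0: "d0 > 0 \<and> t ^\<^sub>m d0 = 1\<^sub>m NN"
      unfolding d0_def by (rule LeastI_ex) (use ex in blast)
    have ru: "(of_nat d0 :: 'e) \<noteq> 0 \<and> v (of_nat d0) = 0" using coprime_unit[OF pr pp cpd] d0 by blast
    obtain W where fW: "fK W" and tW: "t * W = W" using average[OF ft _ _ conjunct2[OF d0]] ru by blast
    have WC: "W \<in> carrier_mat NN NN" using fK_C[OF fW] .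
    have fx: "1\<^sub>m NN * (tau (1\<^sub>m NN) * W) = W" using WC by (simp add: tau_one)
    obtain k K \<mu> where kC: "k \<in> carrier_mat NN NN" and KC: "K \<in> carrier_mat NN NN"
      and kK: "k * K = 1\<^sub>m NN" and Kk: "K * k = 1\<^sub>m NN" and fk: "fK k" and fKK: "fK K" and du: "is_unit_O v (det k)"
      and kE: "k * Em = \<mu> \<cdot>\<^sub>m (W * Em)" and EK: "Em * K = \<mu> \<cdot>\<^sub>m (Em * (tau W * 1\<^sub>m NN))"
      and s1: "1\<^sub>m NN = 1\<^sub>m NN \<longrightarrow> tau K = k"
      using core[OF fK_one fK_one _ _ fW fx] by auto
    have tK': "tau K = k" using s1 by simp
    have mk: "minv k = K" by (rule minv_unique[OF kC KC kK])
    have tk: "theta \<sigma> NN k = k" using theta_eq[OF kC KC kK] tK' by simp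
    have kKm: "k \<in> K_m v n m" using K_m_iff fk du by simp
    have "k \<in> H_grp \<sigma> NN" unfolding H_grp_def GL_def using kC du tk unfolding is_unit_O_def by auto
    then have kH: "k \<in> K_mH v \<sigma> n m" using kKm unfolding K_mH_def NNe by auto
    have tWE: "t * (k * Em) = k * Em" unfolding kE using tC WC by (simp add: smr as[symmetric] tW)
    have yE: "K * t * k * Em = Em"
    proof -
      have "K * t * k * Em = K * (t * (k * Em))" using KC tC kC by (simp add: as)
      also have "\<dots> = (K * k) * Em" unfolding tWE using KC kC by (simp add: as)
      finally show ?thesis using Kk by simp
    qed
    have tWt: "tau W * t = tau W"
    proof -
      have e1: "tau W * tau t = tau W" using tW tC WC by (metis tau_mult)
      have "tau W * t = tau W * tau t * t" by (simp only: e1)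
      also have "\<dots> = tau W * (tau t * t)" using tC by (simp only: as[OF tau_C tau_C tC])
      finally show ?thesis using ttt by simp
    qed
    have Ey: "Em * (K * t * k) = Em"
    proof -
      have "Em * (K * t * k) = (Em * K) * t * k" using KC tC kC by (simp add: as)
      also have "(Em * K) * t = Em * K" unfolding EK using WC tC by (simp add: sml as tWt)
      finally show ?thesis using KC kC by (simp add: as Kk)
    qed
    have wy: "wK (K * t * k)" by (intro wK_mult fK_wK fKK ft fk)
    have "K * t * k \<in> M_set v n m" by (rule M_set_I[OF wy yE Ey])
    then show ?thesis using kH mk by auto
  qed
  show ?thesis unfolding NNe using part1 part2 by blast
qed



end
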